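(* Let $\mathfrak{g}_0=\mathfrak{sp}(2n,\mathbb{R})$, $n\geq 2$, and let $(p_1,q_1),\dots,(p_l,q_l)$ be a sequence as in the context, with corresponding $H$. For $t=0,1,\dots,l$ let $m_t$ be the number of coordinates $i$ with $|H_i|=t$ (so $m_0=r$, $m_t=p_t+q_t$), and partition $\{1,\dots,n\}$ into consecutive blocks $S_0=\{1,\dots,m_0\}$, $S_1$ the next $m_1$ integers, ..., $S_l$ the largest $m_l$ integers. Then the face $\Phi_H$ of $W\rho$ is the set of all $\mu\in\mathbb{R}^n$ such that: for each $t\geq1$, $\{|\mu_i|: |H_i|=t\}=S_t$ and $\mu_i$ has the same sign as $H_i$ for these $i$ (positive where $H_i=t$, negative where $H_i=-t$); and $\{|\mu_i|: H_i=0\}=S_0$ with arbitrary signs. Equivalently $\Phi_H=W_\mathfrak{l}\rho''$ where $\rho''$ is any element of this set. The set $\Phi_H\cap C_\mathfrak{k}$ consists of the elements of $\Phi_H$ with strictly decreasing coordinates, and it determines $\Phi_H$: distinct such sequences give distinct sets $\Phi_H\cap C_\mathfrak{k}$. Consequently the Dirac cohomology $H_D(A_\mathfrak{q})$, whose $\widetilde K$-types have infinitesimal characters exactly $\Phi_H\cap C_\mathfrak{k}$, uniquely determines $A_\mathfrak{q}$ among the $A_\mathfrak{q}$ with $\mathfrak{l}_0$ without compact factors.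
   Context: Setting: $\mathfrak{g}_0=\mathfrak{sp}(2n,\mathbb{R})$, $\mathfrak{k}_0=\mathfrak{u}(n)$, compact Cartan $\mathfrak{t}_0$, $i\mathfrak{t}_0\cong\mathfrak{t}^*_\mathbb{R}\cong\mathbb{R}^n$ identified via the standard inner product, $\mu(H)=\langle\mu,H\rangle$. Roots $\pm\epsilon_i\pm\epsilon_j$ ($i<j$), $\pm2\epsilon_i$; compact positive roots $\epsilon_i-\epsilon_j$ ($i<j$). The Weyl group $W$ is the group of all signed permutations of coordinates, $\rho=(n,n-1,\dots,1)$, so $W\rho$ is the set of all vectors whose absolute values of coordinates are a permutation of $\{1,\dots,n\}$. $C_\mathfrak{k}$ is the $\mathfrak{k}$-dominant chamber $\{x_1\geq\dots\geq x_n\}$. For $H\in i\mathfrak{t}_0$ the face is $\Phi_H=\{\mu\in W\rho:\ \mu(H)\geq\nu(H)\ \forall\nu\in W\rho\}$. For $H$ define $\mathfrak{l}=\mathfrak{t}\oplus\bigoplus_{\alpha(H)=0}\mathfrak{g}_\alpha$, $\mathfrak{u}=\bigoplus_{\alpha(H)>0}\mathfrak{g}_\alpha$, $\mathfrak{q}=\mathfrak{l}\oplus\mathfrak{u}$, $W_\mathfrak{l}$ the Weyl group of $\mathfrak{l}$; $A_\mathfrak{q}$ is the Vogan–Zuckerman module $A_\mathfrak{q}(0)$ with Dirac cohomology $H_D$. The sequences: $(p_1,q_1),\dots,(p_l,q_l)$ of nonnegative integer pairs with $\sum(p_i+q_i)\leq n$, $p_i=0\Rightarrow q_i=1$, $q_i=0\Rightarrow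 p_i=1$, with $r=n-\sum(p_i+q_i)$ and $H=(l^{(p_l)},(l-1)^{(p_{l-1})},\dots,1^{(p_1)},0^{(r)},(-1)^{(q_1)},\dots,(-l)^{(q_l)})$, where $a^{(m)}$ denotes $m$ consecutive entries equal to $a$. These parametrize bijectively the admissible $\Theta$-stable parabolic subalgebras whose Levi factor $\mathfrak{l}_0$ has no compact simple ideal. *)

theory Defs
  imports Complex_Main "HOL-Library.Multiset" "HOL-Combinatorics.Permutations"
begin

text \<open>Vectors of R^n are real lists of length n; coordinate i (1-based in the paper)
  is list index i-1.  The pairing mu(H) is the standard inner product.\<close>

definition ip :: "real list \<Rightarrow> real list \<Rightarrow> real" where
  "ip x y = (\<Sum>i<length x. x ! i * y ! i)"

definition rho :: "nat \<Rightarrow> real list" where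
  "rho n = map real (rev [1..<n+1])"

definition Weyl :: "nat \<Rightarrow> (real list \<Rightarrow> real list) set" where
  "Weyl n = {(\<lambda>x. map (\<lambda>i. s i * x ! (\<sigma> i)) [0..<n]) | \<sigma> s.
               \<sigma> permutes {..<n} \<and> (\<forall>i. s i = 1 \<or> s i = -1)}"

definition Wrho :: "nat \<Rightarrow> real list set" where
  "Wrho n = (\<lambda>w. w (rho n)) ` Weyl n"

definition face :: "nat \<Rightarrow> real list \<Rightarrow> real list set" where
  "face n H = {\<mu> \<in> Wrho n. \<forall>\<nu> \<in> Wrho n. ip \<nu> H \<le> ip \<mu> H}"

definition Ck :: "nat \<Rightarrow> real list set" where
  "Ck n = {x. length x = n \<and> (\<forall>i j. i < j \<and> j < n \<longrightarrow> x ! j \<le> x ! i)}"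

text \<open>Admissible sequences (p_1,q_1),...,(p_l,q_l), given as a list whose
  (t-1)-th entry is (p_t,q_t).\<close>
definition admissible :: "nat \<Rightarrow> (nat \<times> nat) list \<Rightarrow> bool" where
  "admissible n ps \<longleftrightarrow> (\<Sum>(p,q)\<leftarrow>ps. p + q) \<le> n \<and>
     (\<forall>(p,q) \<in> set ps. (p = 0 \<longrightarrow> q = 1) \<and> (q = 0 \<longrightarrow> p = 1))"

text \<open>H = (l^(p_l), ..., 1^(p_1), 0^(r), (-1)^(q_1), ..., (-l)^(q_l)).\<close>
definition Hvec :: "nat \<Rightarrow> (nat \<times> nat) list \<Rightarrow> real list" where
  "Hvec n ps = (let l = length ps; r = n - (\<Sum>(p,q)\<leftarrow>ps. p + q) in
     concat (map (\<lambda>t. replicate (fst (ps ! (t - 1))) (real t)) (rev [1..<l+1]))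
     @ replicate r 0
     @ concat (map (\<lambda>t. replicate (snd (ps ! (t - 1))) (- real t)) [1..<l+1]))"

definition mcount :: "real list \<Rightarrow> nat \<Rightarrow> nat" where
  "mcount H t = card {i. i < length H \<and> \<bar>H ! i\<bar> = real t}"

definition block :: "real list \<Rightarrow> nat \<Rightarrow> real set" where
  "block H t = real ` {(\<Sum>s<t. mcount H s) + 1 .. (\<Sum>s\<le>t. mcount H s)}"

definition face_descr :: "nat \<Rightarrow> (nat \<times> nat) list \<Rightarrow> real list set" where
  "face_descr n ps = (let H = Hvec n ps; l = length ps in
     {\<mu>. length \<mu> = n \<and>
         (\<forall>t \<in> {1..l}.
            (\<lambda>i. \<bar>\<mu> ! i\<bar>) ` {i. i < n \<and> \<bar>H ! i\<bar> = real t} = block H t \<and>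
            (\<forall>i < n. \<bar>H ! i\<bar> = real t \<longrightarrow> sgn (\<mu> ! i) = sgn (H ! i))) \<and>
         (\<lambda>i. \<bar>\<mu> ! i\<bar>) ` {i. i < n \<and> H ! i = 0} = block H 0})"

definition evec :: "nat \<Rightarrow> nat \<Rightarrow> real list" where
  "evec n i = map (\<lambda>k. if k = i then 1 else 0) [0..<n]"

definition vadd :: "real list \<Rightarrow> real list \<Rightarrow> real list" where
  "vadd x y = map2 (+) x y"

definition vscale :: "real \<Rightarrow> real list \<Rightarrow> real list" where
  "vscale c x = map (\<lambda>a. c * a) x"

definition roots :: "nat \<Rightarrow> real list set" where
  "roots n = {vadd (vscale a (evec n i)) (vscale b (evec n j)) | i j a b.
                i < n \<and> j < n \<and> i \<noteq> j \<and> (a = 1 \<or> a = -1) \<and> (b = 1 \<or> b = -1)}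
           \<union> {vscale c (evec n i) | i c. i < n \<and> (c = 2 \<or> c = -2)}"

definition reflection :: "real list \<Rightarrow> real list \<Rightarrow> real list" where
  "reflection \<alpha> x = vadd x (vscale (- 2 * ip x \<alpha> / ip \<alpha> \<alpha>) \<alpha>)"

inductive_set Wl :: "nat \<Rightarrow> real list \<Rightarrow> (real list \<Rightarrow> real list) set" for n H where
  Wl_id: "id \<in> Wl n H"
| Wl_step: "\<alpha> \<in> roots n \<Longrightarrow> ip \<alpha> H = 0 \<Longrightarrow> w \<in> Wl n H \<Longrightarrow> reflection \<alpha> \<circ> w \<in> Wl n H"

end

theory Submission
  imports Defs
begin


lemma rho_nth: "k < n \<Longrightarrow> rho n ! k = real (n - k)"
proof -
  assume k: "k < n"
  have "rev [1..<n+1] ! k = [1..<n+1] ! (n - Suc k)"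
    using k by (simp only: rev_nth length_upt) simp
  also have "\<dots> = n - k" using k by (subst nth_upt) auto
  finally show ?thesis using k unfolding rho_def by (simp only: nth_map length_rev length_upt)
qed

lemma length_rho[simp]: "length (rho n) = n"
  by (simp add: rho_def)

lemma image_minus_lessThan: "(\<lambda>k. n - k) ` {..<n} = {1..(n::nat)}"
proof
  show "(\<lambda>k. n - k) ` {..<n} \<subseteq> {1..n}" by auto
  show "{1..n} \<subseteq> (\<lambda>k. n - k) ` {..<n}"
  proof
    fix m assume "m \<in> {1..n}"
    then have "m = n - (n - m)" "n - m < n" by auto
    then show "m \<in> (\<lambda>k. n - k) ` {..<n}" by blast
  qed
qed

lemma Wrho_char:
  "\<mu> \<in> Wrho n \<longleftrightarrow> length \<mu> = n \<and> (\<lambda>i. \<bar>\<mu>!i\<bar>) ` {..<n} = real ` {1..n}"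
proof
  assume "\<mu> \<in> Wrho n"
  then obtain \<sigma> s where \<mu>: "\<mu> = map (\<lambda>i. s i * rho n ! (\<sigma> i)) [0..<n]"
    and \<sigma>: "\<sigma> permutes {..<n}" and s: "\<forall>i. s i = 1 \<or> s i = -1"
    unfolding Wrho_def Weyl_def by auto
  have lt: "i < n \<Longrightarrow> \<sigma> i < n" for i using permutes_in_image[OF \<sigma>, of i] by simp
  have abs: "i < n \<Longrightarrow> \<bar>\<mu>!i\<bar> = real (n - \<sigma> i)" for i
    using s[rule_format, of i] lt[of i] by (auto simp: \<mu> rho_nth)
  have "(\<lambda>i. \<bar>\<mu>!i\<bar>) ` {..<n} = (\<lambda>i. real (n - \<sigma> i)) ` {..<n}"
    using abs by (auto simp: image_iff)
  also have "\<dots> = real ` ((\<lambda>k. n - k) ` (\<sigma> ` {..<n}))" by (simp add: image_image)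
  also have "\<sigma> ` {..<n} = {..<n}" using \<sigma> by (simp add: permutes_image)
  finally show "length \<mu> = n \<and> (\<lambda>i. \<bar>\<mu>!i\<bar>) ` {..<n} = real ` {1..n}"
    by (simp add: \<mu> image_minus_lessThan)
next
  assume A: "length \<mu> = n \<and> (\<lambda>i. \<bar>\<mu>!i\<bar>) ` {..<n} = real ` {1..n}"
  then have len: "length \<mu> = n" and img: "(\<lambda>i. \<bar>\<mu>!i\<bar>) ` {..<n} = real ` {1..n}" by auto
  have nat: "i < n \<Longrightarrow> \<exists>m. m \<in> {1..n} \<and> \<bar>\<mu>!i\<bar> = real m" for i
    using img by (metis (no_types, lifting) image_iff lessThan_iff)
  have "card ((\<lambda>i. \<bar>\<mu>!i\<bar>) ` {..<n}) = card {..<n}"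
    using img by (simp add: card_image inj_on_def)
  then have inj: "inj_on (\<lambda>i. \<bar>\<mu>!i\<bar>) {..<n}" by (rule eq_card_imp_inj_on[rotated]) simp
  define \<sigma> where "\<sigma> i = (if i < n then n - nat \<lfloor>\<bar>\<mu>!i\<bar>\<rfloor> else i)" for i
  define s where "s i = (if \<mu>!i < 0 then -1 else (1::real))" for i
  have \<sigma>lt: "i < n \<Longrightarrow> \<sigma> i < n" for i using nat[of i] by (auto simp: \<sigma>_def)
  have \<sigma>val: "i < n \<Longrightarrow> real (n - \<sigma> i) = \<bar>\<mu>!i\<bar>" for i using nat[of i] by (auto simp: \<sigma>_def)
  have injs: "inj_on \<sigma> {..<n}"
  proof (rule inj_onI)
    fix i j assume "i \<in> {..<n}" "j \<in> {..<n}" "\<sigma> i = \<sigma> j"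
    then have "\<bar>\<mu>!i\<bar> = \<bar>\<mu>!j\<bar>" using \<sigma>val by (metis lessThan_iff)
    then show "i = j" using inj \<open>i \<in> {..<n}\<close> \<open>j \<in> {..<n}\<close> by (meson inj_onD)
  qed
  have "\<sigma> ` {..<n} = {..<n}" using endo_inj_surj[OF _ _ injs] \<sigma>lt by auto
  then have "bij_betw \<sigma> {..<n} {..<n}" using injs by (simp add: bij_betw_def)
  then have perm: "\<sigma> permutes {..<n}" by (rule bij_imp_permutes) (simp add: \<sigma>_def)
  have "\<mu> = map (\<lambda>i. s i * rho n ! (\<sigma> i)) [0..<n]"
  proof (rule nth_equalityI)
    show "length \<mu> = length (map (\<lambda>i. s i * rho n ! (\<sigma> i)) [0..<n])" by (simp add: len)
    fix i assume "i < length \<mu>"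
    then have i: "i < n" using len by simp
    have "rho n ! (\<sigma> i) = \<bar>\<mu>!i\<bar>" using \<sigma>lt[OF i] \<sigma>val[OF i] by (simp add: rho_nth)
    then show "\<mu> ! i = map (\<lambda>i. s i * rho n ! (\<sigma> i)) [0..<n] ! i"
      using i by (simp add: s_def abs_if)
  qed
  moreover have "\<forall>i. s i = 1 \<or> s i = -1" by (simp add: s_def)
  ultimately show "\<mu> \<in> Wrho n" unfolding Wrho_def Weyl_def using perm
    by (intro image_eqI[where x="\<lambda>x. map (\<lambda>i. s i * x ! \<sigma> i) [0..<n]"]) auto
qed



lemma Wrho_len: "\<mu> \<in> Wrho n \<Longrightarrow> length \<mu> = n"
  by (simp add: Wrho_char)

lemma Wrho_nat: "\<mu> \<in> Wrho n \<Longrightarrow> i < n \<Longrightarrow> \<exists>m. m \<in> {1..n} \<and> \<bar>\<mu>!i\<bar> = real m"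
  unfolding Wrho_char by (metis (no_types, lifting) image_iff lessThan_iff)

lemma Wrho_nz: "\<mu> \<in> Wrho n \<Longrightarrow> i < n \<Longrightarrow> \<mu>!i \<noteq> 0"
  using Wrho_nat by fastforce

lemma Wrho_inj: "\<mu> \<in> Wrho n \<Longrightarrow> inj_on (\<lambda>i. \<bar>\<mu>!i\<bar>) {..<n}"
proof -
  assume "\<mu> \<in> Wrho n"
  then have img: "(\<lambda>i. \<bar>\<mu>!i\<bar>) ` {..<n} = real ` {1..n}" by (simp add: Wrho_char)
  have "card ((\<lambda>i. \<bar>\<mu>!i\<bar>) ` {..<n}) = card {..<n}"
    using img by (simp add: card_image inj_on_def)
  then show ?thesis by (rule eq_card_imp_inj_on[rotated]) simp
qed

lemma Wrho_inj': "\<mu> \<in> Wrho n \<Longrightarrow> i < n \<Longrightarrow> j < n \<Longrightarrow> \<bar>\<mu>!i\<bar> = \<bar>\<mu>!j\<bar> \<Longrightarrow> i = j"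
  using Wrho_inj by (metis inj_onD lessThan_iff)

lemma Wrho_finite: "finite (Wrho n)"
proof -
  let ?S = "real ` {1..n} \<union> uminus ` real ` {1..n}"
  have "Wrho n \<subseteq> {xs. set xs \<subseteq> ?S \<and> length xs = n}"
  proof
    fix \<mu> assume m: "\<mu> \<in> Wrho n"
    have "set \<mu> \<subseteq> ?S"
    proof
      fix x assume "x \<in> set \<mu>"
      then obtain i where i: "i < n" "x = \<mu>!i" using Wrho_len[OF m] by (auto simp: in_set_conv_nth)
      obtain k where "k \<in> {1..n}" "\<bar>x\<bar> = real k" using Wrho_nat[OF m i(1)] i by auto
      then show "x \<in> ?S" by (cases "x \<ge> 0") (auto simp: abs_if image_iff intro!: bexI[of _ k])
    qed
    then show "\<mu> \<in> {xs. set xs \<subseteq> ?S \<and> length xs = n}" using Wrho_len[OF m] by simp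
  qed
  moreover have "finite {xs. set xs \<subseteq> ?S \<and> length xs = n}"
    by (rule finite_lists_length_eq) simp
  ultimately show ?thesis by (rule finite_subset)
qed

lemma Wrho_ne: "rho n \<in> Wrho n"
  unfolding Wrho_char
proof
  show "length (rho n) = n" by simp
  have "(\<lambda>i. \<bar>rho n ! i\<bar>) ` {..<n} = (\<lambda>i. real (n - i)) ` {..<n}"
    by (intro image_cong) (auto simp: rho_nth simp del: of_nat_diff)
  also have "\<dots> = real ` ((\<lambda>k. n - k) ` {..<n})" by (simp only: image_image)
  also have "\<dots> = real ` {1..n}" using image_minus_lessThan[of n] by simp
  finally show "(\<lambda>i. \<bar>rho n ! i\<bar>) ` {..<n} = real ` {1..n}" .
qed

lemma Wrho_count_le:
  assumes m: "\<mu> \<in> Wrho n" and i: "i < n"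
  shows "real (card {k. k < n \<and> \<bar>\<mu>!k\<bar> \<le> \<bar>\<mu>!i\<bar>}) = \<bar>\<mu>!i\<bar>"
    and "real (card {k. k < n \<and> \<bar>\<mu>!k\<bar> < \<bar>\<mu>!i\<bar>}) = \<bar>\<mu>!i\<bar> - 1"
proof -
  obtain m0 where m0: "m0 \<in> {1..n}" "\<bar>\<mu>!i\<bar> = real m0" using Wrho_nat[OF m i] by auto
  have inj: "inj_on (\<lambda>k. \<bar>\<mu>!k\<bar>) {k. k < n \<and> P k}" for P
    using Wrho_inj[OF m] by (rule inj_on_subset) auto
  have img: "(\<lambda>i. \<bar>\<mu>!i\<bar>) ` {..<n} = real ` {1..n}" using m by (simp add: Wrho_char)
  have e1: "(\<lambda>k. \<bar>\<mu>!k\<bar>) ` {k. k < n \<and> \<bar>\<mu>!k\<bar> \<le> \<bar>\<mu>!i\<bar>} = real ` {1..m0}"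
  proof -
    have "(\<lambda>k. \<bar>\<mu>!k\<bar>) ` {k. k < n \<and> \<bar>\<mu>!k\<bar> \<le> \<bar>\<mu>!i\<bar>} = {x \<in> (\<lambda>i. \<bar>\<mu>!i\<bar>) ` {..<n}. x \<le> real m0}"
      using m0 by auto
    also have "\<dots> = real ` {1..m0}" using img m0 by auto
    finally show ?thesis .
  qed
  have e2: "(\<lambda>k. \<bar>\<mu>!k\<bar>) ` {k. k < n \<and> \<bar>\<mu>!k\<bar> < \<bar>\<mu>!i\<bar>} = real ` {1..<m0}"
  proof -
    have "(\<lambda>k. \<bar>\<mu>!k\<bar>) ` {k. k < n \<and> \<bar>\<mu>!k\<bar> < \<bar>\<mu>!i\<bar>} = {x \<in> (\<lambda>i. \<bar>\<mu>!i\<bar>) ` {..<n}. x < real m0}"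
      using m0 by auto
    also have "\<dots> = real ` {1..<m0}" using img m0 by auto
    finally show ?thesis .
  qed
  have "card {k. k < n \<and> \<bar>\<mu>!k\<bar> \<le> \<bar>\<mu>!i\<bar>} = card (real ` {1..m0})"
    using card_image[OF inj] e1 by metis
  then show "real (card {k. k < n \<and> \<bar>\<mu>!k\<bar> \<le> \<bar>\<mu>!i\<bar>}) = \<bar>\<mu>!i\<bar>"
    using m0 by (simp add: card_image)
  have "card {k. k < n \<and> \<bar>\<mu>!k\<bar> < \<bar>\<mu>!i\<bar>} = card (real ` {1..<m0})"
    using card_image[OF inj] e2 by metis
  then show "real (card {k. k < n \<and> \<bar>\<mu>!k\<bar> < \<bar>\<mu>!i\<bar>}) = \<bar>\<mu>!i\<bar> - 1"
    using m0 by (simp add: card_image)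
qed

lemma ip_update:
  assumes "i < length x"
  shows "ip (x[i := v]) G = ip x G + (v - x!i) * G!i"
proof -
  have "ip (x[i := v]) G = (\<Sum>k<length x. x!k * G!k + (if k = i then (v - x!i) * G!i else 0))"
    unfolding ip_def by (intro sum.cong) (auto simp: nth_list_update algebra_simps)
  also have "\<dots> = ip x G + (v - x!i) * G!i"
    using assms by (simp add: sum.distrib ip_def)
  finally show ?thesis .
qed

lemma face_max: "\<nu> \<in> face n G \<Longrightarrow> \<nu>' \<in> Wrho n \<Longrightarrow> ip \<nu>' G \<le> ip \<nu> G"
  by (simp add: face_def)

lemma face_Wrho: "\<nu> \<in> face n G \<Longrightarrow> \<nu> \<in> Wrho n"
  by (simp add: face_def)

lemma LOC1:
  assumes f: "\<nu> \<in> face n G" and i: "i < n"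
  shows "\<nu>!i * G!i \<ge> 0"
proof -
  have W: "\<nu> \<in> Wrho n" using face_Wrho[OF f] .
  have len: "length \<nu> = n" using Wrho_len[OF W] .
  let ?\<nu>' = "\<nu>[i := - (\<nu>!i)]"
  have "?\<nu>' \<in> Wrho n" unfolding Wrho_char
  proof
    show "length ?\<nu>' = n" using len by simp
    have "(\<lambda>k. \<bar>?\<nu>'!k\<bar>) ` {..<n} = (\<lambda>k. \<bar>\<nu>!k\<bar>) ` {..<n}"
      using len i by (intro image_cong) (auto simp: nth_list_update)
    then show "(\<lambda>k. \<bar>?\<nu>'!k\<bar>) ` {..<n} = real ` {1..n}" using W by (simp add: Wrho_char)
  qed
  then have "ip ?\<nu>' G \<le> ip \<nu> G" by (rule face_max[OF f])
  then show ?thesis using ip_update[of i \<nu> "- (\<nu>!i)" G] i len by (simp add: mult.commute)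
qed

lemma sgn_times_abs: "x \<noteq> 0 \<Longrightarrow> x * y \<ge> 0 \<Longrightarrow> sgn x * y = \<bar>y\<bar>"
  for x y :: real
  by (cases "x > 0") (auto simp: sgn_if abs_if mult_less_0_iff zero_le_mult_iff)

lemma LOC2:
  assumes f: "\<nu> \<in> face n G" and a: "a < n" and b: "b < n" and lt: "\<bar>\<nu>!a\<bar> < \<bar>\<nu>!b\<bar>"
  shows "\<bar>G!a\<bar> \<le> \<bar>G!b\<bar>"
proof (rule ccontr)
  assume C: "\<not> \<bar>G!a\<bar> \<le> \<bar>G!b\<bar>"
  have W: "\<nu> \<in> Wrho n" using face_Wrho[OF f] .
  have len: "length \<nu> = n" using Wrho_len[OF W] .
  have ab: "a \<noteq> b" using lt by auto
  let ?\<nu>' = "\<nu>[a := sgn (\<nu>!a) * \<bar>\<nu>!b\<bar>, b := sgn (\<nu>!b) * \<bar>\<nu>!a\<bar>]"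
  have nza: "\<nu>!a \<noteq> 0" and nzb: "\<nu>!b \<noteq> 0" using Wrho_nz[OF W] a b by auto
  have abs': "\<bar>?\<nu>'!k\<bar> = \<bar>\<nu>!(Transposition.transpose a b k)\<bar>" if "k < n" for k
    using that a b ab nza nzb len by (auto simp: nth_list_update abs_mult Transposition.transpose_def)
  have "?\<nu>' \<in> Wrho n" unfolding Wrho_char
  proof
    show "length ?\<nu>' = n" using len by simp
    have "(\<lambda>k. \<bar>?\<nu>'!k\<bar>) ` {..<n} = (\<lambda>k. \<bar>\<nu>!k\<bar>) ` (Transposition.transpose a b ` {..<n})"
      using abs' by (auto simp: image_iff)
    also have "Transposition.transpose a b ` {..<n} = {..<n}" using a b
      by (simp add: Transposition.transpose_image_eq)
    finally show "(\<lambda>k. \<bar>?\<nu>'!k\<bar>) ` {..<n} = real ` {1..n}" using W by (simp add: Wrho_char)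
  qed
  then have le: "ip ?\<nu>' G \<le> ip \<nu> G" by (rule face_max[OF f])
  have "ip ?\<nu>' G = ip \<nu> G + (sgn (\<nu>!a) * \<bar>\<nu>!b\<bar> - \<nu>!a) * G!a + (sgn (\<nu>!b) * \<bar>\<nu>!a\<bar> - \<nu>!b) * G!b"
    using ip_update[of b "\<nu>[a := sgn (\<nu>!a) * \<bar>\<nu>!b\<bar>]" "sgn (\<nu>!b) * \<bar>\<nu>!a\<bar>" G]
      ip_update[of a \<nu> "sgn (\<nu>!a) * \<bar>\<nu>!b\<bar>" G] a b ab len by simp
  also have "(sgn (\<nu>!a) * \<bar>\<nu>!b\<bar> - \<nu>!a) * G!a = (\<bar>\<nu>!b\<bar> - \<bar>\<nu>!a\<bar>) * (sgn (\<nu>!a) * G!a)"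
    by (simp add: algebra_simps abs_mult_sgn[symmetric] sgn_mult_abs) (metis mult.commute sgn_mult_abs)
  also have "(sgn (\<nu>!b) * \<bar>\<nu>!a\<bar> - \<nu>!b) * G!b = - ((\<bar>\<nu>!b\<bar> - \<bar>\<nu>!a\<bar>) * (sgn (\<nu>!b) * G!b))"
    by (simp add: algebra_simps) (metis mult.commute sgn_mult_abs)
  also have "sgn (\<nu>!a) * G!a = \<bar>G!a\<bar>" using sgn_times_abs[OF nza LOC1[OF f a]] .
  also have "sgn (\<nu>!b) * G!b = \<bar>G!b\<bar>" using sgn_times_abs[OF nzb LOC1[OF f b]] .
  finally have "ip \<nu> G + (\<bar>\<nu>!b\<bar> - \<bar>\<nu>!a\<bar>) * (\<bar>G!a\<bar> - \<bar>G!b\<bar>) \<le> ip \<nu> G"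
    using le by (simp add: algebra_simps)
  moreover have "(\<bar>\<nu>!b\<bar> - \<bar>\<nu>!a\<bar>) * (\<bar>G!a\<bar> - \<bar>G!b\<bar>) > 0" using lt C by simp
  ultimately show False by simp
qed



definition lo :: "nat \<Rightarrow> real list \<Rightarrow> real \<Rightarrow> nat" where
  "lo n H y = card {k. k < n \<and> \<bar>H!k\<bar> < y}"
definition hi :: "nat \<Rightarrow> real list \<Rightarrow> real \<Rightarrow> nat" where
  "hi n H y = card {k. k < n \<and> \<bar>H!k\<bar> \<le> y}"

definition D :: "nat \<Rightarrow> real list \<Rightarrow> real list set" where
  "D n H = {\<nu> \<in> Wrho n. \<forall>i<n. real (lo n H \<bar>H!i\<bar>) < \<bar>\<nu>!i\<bar> \<and> \<bar>\<nu>!i\<bar> \<le> real (hi n H \<bar>H!i\<bar>)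
                \<and> (H!i \<noteq> 0 \<longrightarrow> sgn (\<nu>!i) = sgn (H!i))}"

lemma hi_lo: "hi n H y = lo n H y + card {k. k < n \<and> \<bar>H!k\<bar> = y}"
proof -
  have "{k. k < n \<and> \<bar>H!k\<bar> \<le> y} = {k. k < n \<and> \<bar>H!k\<bar> < y} \<union> {k. k < n \<and> \<bar>H!k\<bar> = y}" by auto
  then show ?thesis unfolding hi_def lo_def by (simp, subst card_Un_disjoint) auto
qed

lemma hi_le_lo: "y < y' \<Longrightarrow> hi n H y \<le> lo n H y'"
  unfolding hi_def lo_def by (rule card_mono) auto

lemma hi_le_n: "hi n H y \<le> n"
proof -
  have "hi n H y \<le> card {..<n}" unfolding hi_def by (rule card_mono) auto
  then show ?thesis by simp
qed

lemma DE: assumes "\<nu> \<in> D n H" "i < n"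
  shows "real (lo n H \<bar>H!i\<bar>) < \<bar>\<nu>!i\<bar>" "\<bar>\<nu>!i\<bar> \<le> real (hi n H \<bar>H!i\<bar>)"
    "H!i \<noteq> 0 \<Longrightarrow> sgn (\<nu>!i) = sgn (H!i)" "\<nu> \<in> Wrho n"
  using assms by (auto simp: D_def)

lemma D_lt:
  assumes "\<nu> \<in> D n H" "a < n" "b < n" "\<bar>H!a\<bar> < \<bar>H!b\<bar>"
  shows "\<bar>\<nu>!a\<bar> < \<bar>\<nu>!b\<bar>"
proof -
  have "\<bar>\<nu>!a\<bar> \<le> real (hi n H \<bar>H!a\<bar>)" using DE[OF assms(1,2)] by simp
  also have "\<dots> \<le> real (lo n H \<bar>H!b\<bar>)" using hi_le_lo[OF assms(4)] by simp
  also have "\<dots> < \<bar>\<nu>!b\<bar>" using DE[OF assms(1,3)] by simp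
  finally show ?thesis .
qed

lemma IMG:
  assumes "\<nu> \<in> D n H"
  shows "(\<lambda>i. \<bar>\<nu>!i\<bar>) ` {i. i < n \<and> \<bar>H!i\<bar> = y} = real ` {lo n H y<..hi n H y}"
proof (rule card_subset_eq)
  have W: "\<nu> \<in> Wrho n" using assms by (simp add: D_def)
  show "finite (real ` {lo n H y<..hi n H y})" by simp
  show "(\<lambda>i. \<bar>\<nu>!i\<bar>) ` {i. i < n \<and> \<bar>H!i\<bar> = y} \<subseteq> real ` {lo n H y<..hi n H y}"
  proof
    fix x assume "x \<in> (\<lambda>i. \<bar>\<nu>!i\<bar>) ` {i. i < n \<and> \<bar>H!i\<bar> = y}"
    then obtain i where i: "i < n" "\<bar>H!i\<bar> = y" "x = \<bar>\<nu>!i\<bar>" by auto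
    obtain m where m: "\<bar>\<nu>!i\<bar> = real m" using Wrho_nat[OF W i(1)] by auto
    have "lo n H y < m" "m \<le> hi n H y" using DE[OF assms i(1)] i m by auto
    then show "x \<in> real ` {lo n H y<..hi n H y}" using i m by auto
  qed
  have inj: "inj_on (\<lambda>i. \<bar>\<nu>!i\<bar>) {i. i < n \<and> \<bar>H!i\<bar> = y}"
    using Wrho_inj[OF W] by (rule inj_on_subset) auto
  show "card ((\<lambda>i. \<bar>\<nu>!i\<bar>) ` {i. i < n \<and> \<bar>H!i\<bar> = y}) = card (real ` {lo n H y<..hi n H y})"
    using card_image[OF inj] hi_lo[of n H y] by (simp add: card_image)
qed

lemma face_sub_D: "face n H \<subseteq> D n H"
proof
  fix \<nu> assume f: "\<nu> \<in> face n H"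
  have W: "\<nu> \<in> Wrho n" using face_Wrho[OF f] .
  show "\<nu> \<in> D n H" unfolding D_def
  proof (intro CollectI conjI allI impI W)
    fix i assume i: "i < n"
    have "{k. k < n \<and> \<bar>H!k\<bar> < \<bar>H!i\<bar>} \<subseteq> {k. k < n \<and> \<bar>\<nu>!k\<bar> < \<bar>\<nu>!i\<bar>}"
    proof safe
      fix k assume k: "k < n" "\<bar>H!k\<bar> < \<bar>H!i\<bar>"
      then have "k \<noteq> i" by auto
      then have "\<bar>\<nu>!k\<bar> \<noteq> \<bar>\<nu>!i\<bar>" using Wrho_inj'[OF W k(1) i] by auto
      moreover have "\<not> \<bar>\<nu>!i\<bar> < \<bar>\<nu>!k\<bar>" using LOC2[OF f i k(1)] k(2) by auto
      ultimately show "\<bar>\<nu>!k\<bar> < \<bar>\<nu>!i\<bar>" by auto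
    qed
    then have "lo n H \<bar>H!i\<bar> \<le> card {k. k < n \<and> \<bar>\<nu>!k\<bar> < \<bar>\<nu>!i\<bar>}"
      unfolding lo_def by (rule card_mono[rotated]) simp
    then show "real (lo n H \<bar>H!i\<bar>) < \<bar>\<nu>!i\<bar>" using Wrho_count_le(2)[OF W i] by linarith
    have "{k. k < n \<and> \<bar>\<nu>!k\<bar> \<le> \<bar>\<nu>!i\<bar>} \<subseteq> {k. k < n \<and> \<bar>H!k\<bar> \<le> \<bar>H!i\<bar>}"
    proof safe
      fix k assume k: "k < n" "\<bar>\<nu>!k\<bar> \<le> \<bar>\<nu>!i\<bar>"
      show "\<bar>H!k\<bar> \<le> \<bar>H!i\<bar>"
      proof (cases "k = i")
        case False
        then have "\<bar>\<nu>!k\<bar> \<noteq> \<bar>\<nu>!i\<bar>" using Wrho_inj'[OF W k(1) i] by auto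
        then show ?thesis using LOC2[OF f k(1) i] k(2) by auto
      qed simp
    qed
    then have "card {k. k < n \<and> \<bar>\<nu>!k\<bar> \<le> \<bar>\<nu>!i\<bar>} \<le> hi n H \<bar>H!i\<bar>"
      unfolding hi_def by (rule card_mono[rotated]) simp
    then show "\<bar>\<nu>!i\<bar> \<le> real (hi n H \<bar>H!i\<bar>)" using Wrho_count_le(1)[OF W i] by linarith
    assume "H!i \<noteq> 0"
    then show "sgn (\<nu>!i) = sgn (H!i)" using LOC1[OF f i] Wrho_nz[OF W i]
      by (auto simp: sgn_if zero_le_mult_iff)
  qed
qed

lemma D_value:
  assumes "\<nu> \<in> D n H"
  shows "ip \<nu> H = (\<Sum>y\<in>(\<lambda>i. \<bar>H!i\<bar>) ` {..<n}. y * \<Sum>(real ` {lo n H y<..hi n H y}))"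
proof -
  have W: "\<nu> \<in> Wrho n" using assms by (simp add: D_def)
  have "ip \<nu> H = (\<Sum>i<n. \<bar>\<nu>!i\<bar> * \<bar>H!i\<bar>)"
    unfolding ip_def Wrho_len[OF W]
  proof (rule sum.cong)
    fix i assume "i \<in> {..<n}"
    then have i: "i < n" by simp
    show "\<nu>!i * H!i = \<bar>\<nu>!i\<bar> * \<bar>H!i\<bar>"
    proof (cases "H!i = 0")
      case False
      then have "sgn (\<nu>!i) = sgn (H!i)" using DE(3)[OF assms i] by simp
      then show ?thesis by (metis abs_mult abs_mult_self_eq sgn_mult_self_eq mult.commute
            sgn_abs abs_sgn_eq sgn_mult zero_le_mult_iff abs_of_nonneg sgn_greater sgn_less
            linorder_neq_iff mult_pos_pos mult_neg_neg less_imp_le)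
    qed simp
  qed simp
  also have "\<dots> = (\<Sum>y\<in>(\<lambda>i. \<bar>H!i\<bar>) ` {..<n}. \<Sum>i\<in>{x. x \<in> {..<n} \<and> \<bar>H!x\<bar> = y}. \<bar>\<nu>!i\<bar> * \<bar>H!i\<bar>)"
    by (rule sum.image_gen) simp
  also have "\<dots> = (\<Sum>y\<in>(\<lambda>i. \<bar>H!i\<bar>) ` {..<n}. y * \<Sum>(real ` {lo n H y<..hi n H y}))"
  proof (rule sum.cong[OF refl])
    fix y
    have inj: "inj_on (\<lambda>i. \<bar>\<nu>!i\<bar>) {i. i < n \<and> \<bar>H!i\<bar> = y}"
      using Wrho_inj[OF W] by (rule inj_on_subset) auto
    have "(\<Sum>i\<in>{x. x \<in> {..<n} \<and> \<bar>H!x\<bar> = y}. \<bar>\<nu>!i\<bar> * \<bar>H!i\<bar>) = y * (\<Sum>i\<in>{i. i < n \<and> \<bar>H!i\<bar> = y}. \<bar>\<nu>!i\<bar>)"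
      by (simp add: sum_distrib_left mult.commute)
    also have "(\<Sum>i\<in>{i. i < n \<and> \<bar>H!i\<bar> = y}. \<bar>\<nu>!i\<bar>) = \<Sum>((\<lambda>i. \<bar>\<nu>!i\<bar>) ` {i. i < n \<and> \<bar>H!i\<bar> = y})"
      using sum.reindex[OF inj, of id] by simp
    also have "\<dots> = \<Sum>(real ` {lo n H y<..hi n H y})" using IMG[OF assms] by simp
    finally show "(\<Sum>i\<in>{x. x \<in> {..<n} \<and> \<bar>H!x\<bar> = y}. \<bar>\<nu>!i\<bar> * \<bar>H!i\<bar>) = y * \<Sum>(real ` {lo n H y<..hi n H y})" .
  qed
  finally show ?thesis .
qed

lemma face_ne: "\<exists>\<nu>. \<nu> \<in> face n H"
proof -
  let ?f = "\<lambda>\<nu>. ip \<nu> H"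
  have fin: "finite (?f ` Wrho n)" using Wrho_finite by simp
  have ne: "?f ` Wrho n \<noteq> {}" using Wrho_ne by auto
  obtain \<nu> where \<nu>: "\<nu> \<in> Wrho n" "?f \<nu> = Max (?f ` Wrho n)" using Max_in[OF fin ne] by auto
  have "\<nu> \<in> face n H" unfolding face_def using \<nu> Max_ge[OF fin] by auto
  then show ?thesis by blast
qed

lemma face_eq_D: "face n H = D n H"
proof
  show "face n H \<subseteq> D n H" by (rule face_sub_D)
  show "D n H \<subseteq> face n H"
  proof
    fix \<nu> assume \<nu>: "\<nu> \<in> D n H"
    obtain \<nu>0 where f0: "\<nu>0 \<in> face n H" using face_ne by blast
    have "ip \<nu> H = ip \<nu>0 H" using D_value[OF \<nu>] D_value[OF face_sub_D[THEN subsetD, OF f0]] by simp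
    then show "\<nu> \<in> face n H" unfolding face_def using f0 \<nu> by (auto simp: face_def D_def)
  qed
qed



lemma part3: "face n H \<inter> Ck n = {\<mu> \<in> face n H. \<forall>i j. i < j \<and> j < n \<longrightarrow> \<mu> ! j < \<mu> ! i}"
proof safe
  fix \<mu> i j assume f: "\<mu> \<in> face n H" and c: "\<mu> \<in> Ck n" and ij: "i < j" "j < n"
  have W: "\<mu> \<in> Wrho n" using face_Wrho[OF f] .
  have "\<mu>!j \<le> \<mu>!i" using c ij by (auto simp: Ck_def)
  moreover have "\<mu>!j \<noteq> \<mu>!i" using Wrho_inj'[OF W, of i j] ij by auto
  ultimately show "\<mu>!j < \<mu>!i" by simp
next
  fix \<mu> assume f: "\<mu> \<in> face n H" and s: "\<forall>i j. i < j \<and> j < n \<longrightarrow> \<mu> ! j < \<mu> ! i"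
  show "\<mu> \<in> Ck n" unfolding Ck_def using s Wrho_len[OF face_Wrho[OF f]] by (auto intro: less_imp_le)
qed

definition r1 :: "nat \<Rightarrow> nat \<Rightarrow> nat \<Rightarrow> real \<Rightarrow> real \<Rightarrow> real list" where
  "r1 n i j a b = vadd (vscale a (evec n i)) (vscale b (evec n j))"
definition r2 :: "nat \<Rightarrow> nat \<Rightarrow> real \<Rightarrow> real list" where
  "r2 n i c = vscale c (evec n i)"

lemma len_vadd[simp]: "length (vadd x y) = min (length x) (length y)"
  by (simp add: vadd_def)
lemma len_vscale[simp]: "length (vscale c x) = length x"
  by (simp add: vscale_def)
lemma len_evec[simp]: "length (evec n i) = n"
  by (simp add: evec_def)
lemma nth_vadd: "k < length x \<Longrightarrow> k < length y \<Longrightarrow> vadd x y ! k = x!k + y!k"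
  by (simp add: vadd_def)
lemma nth_vscale: "k < length x \<Longrightarrow> vscale c x ! k = c * x!k"
  by (simp add: vscale_def)
lemma nth_evec: "k < n \<Longrightarrow> evec n i ! k = (if k = i then 1 else 0)"
  by (simp add: evec_def)

lemma len_r1[simp]: "length (r1 n i j a b) = n" by (simp add: r1_def)
lemma len_r2[simp]: "length (r2 n i c) = n" by (simp add: r2_def)
lemma nth_r1: "k < n \<Longrightarrow> r1 n i j a b ! k = (if k = i then a else 0) + (if k = j then b else 0)"
  by (simp add: r1_def nth_vadd nth_vscale nth_evec)
lemma nth_r2: "k < n \<Longrightarrow> r2 n i c ! k = (if k = i then c else 0)"
  by (simp add: r2_def nth_vscale nth_evec)

lemma ip_r1_right: "length x = n \<Longrightarrow> i < n \<Longrightarrow> j < n \<Longrightarrow> i \<noteq> j \<Longrightarrow> ip x (r1 n i j a b) = a * x!i + b * x!j"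
proof -
  assume l: "length x = n" and ij: "i < n" "j < n" "i \<noteq> j"
  have "ip x (r1 n i j a b) = (\<Sum>k<n. (if k = i then a * x!i else 0) + (if k = j then b * x!j else 0))"
    unfolding ip_def l by (rule sum.cong) (auto simp: nth_r1 algebra_simps)
  also have "\<dots> = a * x!i + b * x!j" using ij by (simp add: sum.distrib)
  finally show ?thesis .
qed
lemma ip_r1_left: "i < n \<Longrightarrow> j < n \<Longrightarrow> i \<noteq> j \<Longrightarrow> ip (r1 n i j a b) x = a * x!i + b * x!j"
proof -
  assume ij: "i < n" "j < n" "i \<noteq> j"
  have "ip (r1 n i j a b) x = (\<Sum>k<n. (if k = i then a * x!i else 0) + (if k = j then b * x!j else 0))"
    unfolding ip_def len_r1 by (rule sum.cong) (auto simp: nth_r1 algebra_simps)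
  also have "\<dots> = a * x!i + b * x!j" using ij by (simp add: sum.distrib)
  finally show ?thesis .
qed
lemma ip_r2_right: "length x = n \<Longrightarrow> i < n \<Longrightarrow> ip x (r2 n i c) = c * x!i"
proof -
  assume l: "length x = n" and i: "i < n"
  have "ip x (r2 n i c) = (\<Sum>k<n. (if k = i then c * x!i else 0))"
    unfolding ip_def l by (rule sum.cong) (auto simp: nth_r2 algebra_simps)
  also have "\<dots> = c * x!i" using i by simp
  finally show ?thesis .
qed
lemma ip_r2_left: "i < n \<Longrightarrow> ip (r2 n i c) x = c * x!i"
proof -
  assume i: "i < n"
  have "ip (r2 n i c) x = (\<Sum>k<n. (if k = i then c * x!i else 0))"
    unfolding ip_def len_r2 by (rule sum.cong) (auto simp: nth_r2 algebra_simps)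
  also have "\<dots> = c * x!i" using i by simp
  finally show ?thesis .
qed

lemma roots_cases:
  assumes "\<alpha> \<in> roots n"
  obtains i j a b where "\<alpha> = r1 n i j a b" "i < n" "j < n" "i \<noteq> j" "a = 1 \<or> a = -1" "b = 1 \<or> b = -1"
  | i c where "\<alpha> = r2 n i c" "i < n" "c = 2 \<or> c = -2"
  using assms unfolding roots_def r1_def r2_def by blast

lemma r1_roots: "i < n \<Longrightarrow> j < n \<Longrightarrow> i \<noteq> j \<Longrightarrow> (a = 1 \<or> a = -1) \<Longrightarrow> (b = 1 \<or> b = -1) \<Longrightarrow> r1 n i j a b \<in> roots n"
  unfolding roots_def r1_def by blast
lemma r2_roots: "i < n \<Longrightarrow> r2 n i 2 \<in> roots n"
  unfolding roots_def r2_def by blast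

lemma refl_r1:
  assumes len: "length x = n" and ij: "i < n" "j < n" "i \<noteq> j" and a: "a = 1 \<or> a = -1" and b: "b = 1 \<or> b = -1"
  shows "reflection (r1 n i j a b) x = x[i := - a * b * x!j, j := - a * b * x!i]"
proof -
  have aa: "ip (r1 n i j a b) (r1 n i j a b) = 2"
    using a b ij by (auto simp: ip_r1_left nth_r1)
  have ipx: "ip x (r1 n i j a b) = a * x!i + b * x!j" using ip_r1_right[OF len ij] .
  show ?thesis
  proof (rule nth_equalityI)
    show "length (reflection (r1 n i j a b) x) = length (x[i := - a * b * x!j, j := - a * b * x!i])"
      by (simp add: reflection_def len)
    fix k assume "k < length (reflection (r1 n i j a b) x)"
    then have k: "k < n" by (simp add: reflection_def len)
    show "reflection (r1 n i j a b) x ! k = x[i := - a * b * x!j, j := - a * b * x!i] ! k"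
      using k len ij a b unfolding reflection_def aa ipx
      apply (auto simp: nth_vadd nth_vscale nth_r1 nth_list_update)
      apply (simp_all add: field_simps)
      done
  qed
qed

lemma refl_r2:
  assumes len: "length x = n" and i: "i < n" and c: "c = 2 \<or> c = -2"
  shows "reflection (r2 n i c) x = x[i := - x!i]"
proof -
  have aa: "ip (r2 n i c) (r2 n i c) = 4"
    using c i by (auto simp: ip_r2_left nth_r2)
  have ipx: "ip x (r2 n i c) = c * x!i" using ip_r2_right[OF len i] .
  show ?thesis
  proof (rule nth_equalityI)
    show "length (reflection (r2 n i c) x) = length (x[i := - x!i])"
      by (simp add: reflection_def len)
    fix k assume "k < length (reflection (r2 n i c) x)"
    then have k: "k < n" by (simp add: reflection_def len)
    show "reflection (r2 n i c) x ! k = x[i := - x!i] ! k"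
      using k len i c unfolding reflection_def aa ipx
      by (auto simp: nth_vadd nth_vscale nth_r2 nth_list_update)
  qed
qed

lemma ip_vadd_vscale:
  assumes "length x = n" "length \<alpha> = n"
  shows "ip (vadd x (vscale c \<alpha>)) G = ip x G + c * ip \<alpha> G"
  using assms unfolding ip_def
  by (simp add: nth_vadd nth_vscale sum.distrib sum_distrib_left algebra_simps)

lemma Wrho_swap:
  assumes W: "x \<in> Wrho n" and ij: "i < n" "j < n" "i \<noteq> j" and s: "\<bar>s\<bar> = 1"
  shows "x[i := s * x!j, j := s * x!i] \<in> Wrho n"
proof -
  have len: "length x = n" using Wrho_len[OF W] .
  let ?x' = "x[i := s * x!j, j := s * x!i]"
  have abs': "\<bar>?x'!k\<bar> = \<bar>x!(Transposition.transpose i j k)\<bar>" if "k < n" for k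
    using that ij len s by (auto simp: nth_list_update abs_mult Transposition.transpose_def)
  show ?thesis unfolding Wrho_char
  proof
    show "length ?x' = n" using len by simp
    have "(\<lambda>k. \<bar>?x'!k\<bar>) ` {..<n} = (\<lambda>k. \<bar>x!k\<bar>) ` (Transposition.transpose i j ` {..<n})"
      using abs' by (auto simp: image_iff)
    also have "Transposition.transpose i j ` {..<n} = {..<n}" using ij
      by (simp add: Transposition.transpose_image_eq)
    finally show "(\<lambda>k. \<bar>?x'!k\<bar>) ` {..<n} = real ` {1..n}" using W by (simp add: Wrho_char)
  qed
qed

lemma Wrho_flip:
  assumes W: "x \<in> Wrho n" and i: "i < n"
  shows "x[i := - x!i] \<in> Wrho n"
proof -
  have len: "length x = n" using Wrho_len[OF W] .
  show ?thesis unfolding Wrho_char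
  proof
    show "length (x[i := - x!i]) = n" using len by simp
    have "(\<lambda>k. \<bar>x[i := - x!i]!k\<bar>) ` {..<n} = (\<lambda>k. \<bar>x!k\<bar>) ` {..<n}"
      using len i by (intro image_cong) (auto simp: nth_list_update)
    then show "(\<lambda>k. \<bar>x[i := - x!i]!k\<bar>) ` {..<n} = real ` {1..n}" using W by (simp add: Wrho_char)
  qed
qed

lemma refl_face:
  assumes \<alpha>: "\<alpha> \<in> roots n" and h: "ip \<alpha> H = 0" and f: "x \<in> face n H"
  shows "reflection \<alpha> x \<in> face n H"
proof -
  have W: "x \<in> Wrho n" using face_Wrho[OF f] .
  have len: "length x = n" using Wrho_len[OF W] .
  have la: "length \<alpha> = n" using \<alpha> by (cases rule: roots_cases) auto
  have ipe: "ip (reflection \<alpha> x) H = ip x H"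
    unfolding reflection_def using ip_vadd_vscale[OF len la] h by simp
  have "reflection \<alpha> x \<in> Wrho n"
    using \<alpha>
  proof (cases rule: roots_cases)
    case (1 i j a b)
    have "\<bar>- a * b\<bar> = 1" using 1 by auto
    then show ?thesis using refl_r1[OF len 1(2-6)] Wrho_swap[OF W 1(2-4), of "- a * b"] 1(1) by simp
  next
    case (2 i c)
    then show ?thesis using refl_r2[OF len 2(2-3)] Wrho_flip[OF W 2(2)] by simp
  qed
  then show ?thesis using f ipe by (simp add: face_def)
qed

lemma Wl_face: "w \<in> Wl n H \<Longrightarrow> x \<in> face n H \<Longrightarrow> w x \<in> face n H"
  by (induction rule: Wl.induct) (auto intro: refl_face)

lemma orbit_step:
  assumes \<mu>: "\<mu> \<in> face n H" and \<nu>: "\<nu> \<in> face n H" and ne: "\<nu> \<noteq> \<mu>"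
  shows "\<exists>\<alpha>. \<alpha> \<in> roots n \<and> ip \<alpha> H = 0 \<and>
           card {k. k < n \<and> reflection \<alpha> \<nu> ! k \<noteq> \<mu>!k} < card {k. k < n \<and> \<nu>!k \<noteq> \<mu>!k}"
proof -
  have W\<mu>: "\<mu> \<in> Wrho n" using face_Wrho[OF \<mu>] .
  have W\<nu>: "\<nu> \<in> Wrho n" using face_Wrho[OF \<nu>] .
  have D\<mu>: "\<mu> \<in> D n H" and D\<nu>: "\<nu> \<in> D n H" using \<mu> \<nu> face_eq_D by auto
  have l\<mu>: "length \<mu> = n" and l\<nu>: "length \<nu> = n" using Wrho_len W\<mu> W\<nu> by auto
  obtain i where i: "i < n" "\<nu>!i \<noteq> \<mu>!i" using ne l\<mu> l\<nu> nth_equalityI by metis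
  let ?S = "{k. k < n \<and> \<nu>!k \<noteq> \<mu>!k}"
  have finS: "finite ?S" by simp
  have iS: "i \<in> ?S" using i by simp
  have "\<bar>\<mu>!i\<bar> \<in> (\<lambda>k. \<bar>\<nu>!k\<bar>) ` {..<n}"
    using W\<mu> W\<nu> i(1) by (auto simp: Wrho_char)
  then obtain j where j: "j < n" "\<bar>\<nu>!j\<bar> = \<bar>\<mu>!i\<bar>" by auto
  show ?thesis
  proof (cases "j = i")
    case True
    then have neg: "\<nu>!i = - \<mu>!i" using j i by (auto simp: abs_if split: if_splits)
    have nz: "\<mu>!i \<noteq> 0" using Wrho_nz[OF W\<mu> i(1)] .
    have H0: "H!i = 0"
    proof (rule ccontr)
      assume "H!i \<noteq> 0"
      then have "sgn (\<nu>!i) = sgn (\<mu>!i)" using DE(3)[OF D\<mu> i(1)] DE(3)[OF D\<nu> i(1)] by simp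
      then show False using neg nz by (auto simp: sgn_if split: if_splits)
    qed
    let ?\<alpha> = "r2 n i 2"
    have "reflection ?\<alpha> \<nu> = \<nu>[i := \<mu>!i]" using refl_r2[OF l\<nu> i(1)] neg by simp
    then have "{k. k < n \<and> reflection ?\<alpha> \<nu> ! k \<noteq> \<mu>!k} \<subseteq> ?S - {i}"
      using l\<nu> by (auto simp: nth_list_update split: if_splits) (metis nth_list_update_eq nth_list_update_neq)
    then have "card {k. k < n \<and> reflection ?\<alpha> \<nu> ! k \<noteq> \<mu>!k} \<le> card (?S - {i})"
      by (rule card_mono[rotated]) simp
    also have "\<dots> < card ?S" by (rule card_Diff1_less[OF finS iS])
    finally have lt: "card {k. k < n \<and> reflection ?\<alpha> \<nu> ! k \<noteq> \<mu>!k} < card ?S" .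
    have "ip ?\<alpha> H = 0" using ip_r2_left[OF i(1), of 2 H] H0 by simp
    then show ?thesis using r2_roots[OF i(1)] lt by blast
  next
    case False
    have habs: "\<bar>H!i\<bar> = \<bar>H!j\<bar>"
    proof (rule ccontr)
      assume "\<bar>H!i\<bar> \<noteq> \<bar>H!j\<bar>"
      then consider "\<bar>H!i\<bar> < \<bar>H!j\<bar>" | "\<bar>H!j\<bar> < \<bar>H!i\<bar>" by linarith
      then show False
      proof cases
        case 1
        have "\<bar>\<mu>!i\<bar> \<le> real (hi n H \<bar>H!i\<bar>)" using DE(2)[OF D\<mu> i(1)] .
        also have "\<dots> \<le> real (lo n H \<bar>H!j\<bar>)" using hi_le_lo[OF 1] by simp
        also have "\<dots> < \<bar>\<nu>!j\<bar>" using DE(1)[OF D\<nu> j(1)] .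
        finally show False using j by simp
      next
        case 2
        have "\<bar>\<nu>!j\<bar> \<le> real (hi n H \<bar>H!j\<bar>)" using DE(2)[OF D\<nu> j(1)] .
        also have "\<dots> \<le> real (lo n H \<bar>H!i\<bar>)" using hi_le_lo[OF 2] by simp
        also have "\<dots> < \<bar>\<mu>!i\<bar>" using DE(1)[OF D\<mu> i(1)] .
        finally show False using j by simp
      qed
    qed
    define \<sigma> where "\<sigma> = sgn (\<mu>!i) * sgn (\<nu>!j)"
    have nzm: "\<mu>!i \<noteq> 0" using Wrho_nz[OF W\<mu> i(1)] .
    have nzn: "\<nu>!j \<noteq> 0" using Wrho_nz[OF W\<nu> j(1)] .
    have \<sigma>pm: "\<sigma> = 1 \<or> \<sigma> = -1" using nzm nzn by (auto simp: \<sigma>_def sgn_if)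
    have \<sigma>\<nu>: "\<sigma> * \<nu>!j = \<mu>!i"
    proof -
      have sa: "sgn (\<nu>!j) * \<nu>!j = \<bar>\<nu>!j\<bar>" by (simp add: sgn_if)
      have "\<sigma> * \<nu>!j = sgn (\<mu>!i) * \<bar>\<nu>!j\<bar>" by (simp add: \<sigma>_def mult.assoc sa)
      also have "\<dots> = \<mu>!i" using j by (simp add: sgn_mult_abs)
      finally show ?thesis .
    qed
    have ipH: "H!i - \<sigma> * H!j = 0"
    proof (cases "H!i = 0")
      case True
      then show ?thesis using habs by simp
    next
      case False
      then have Hj: "H!j \<noteq> 0" using habs by auto
      have s1: "sgn (\<mu>!i) = sgn (H!i)" using DE(3)[OF D\<mu> i(1) False] .
      have s2: "sgn (\<nu>!j) = sgn (H!j)" using DE(3)[OF D\<nu> j(1) Hj] .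
      have sb: "sgn (H!j) * H!j = \<bar>H!j\<bar>" by (simp add: sgn_if)
      have "\<sigma> * H!j = sgn (H!i) * \<bar>H!j\<bar>" by (simp add: \<sigma>_def s1 s2 mult.assoc sb)
      also have "\<dots> = H!i" using habs[symmetric] by (simp add: sgn_if)
      finally show ?thesis by simp
    qed
    let ?\<alpha> = "r1 n i j 1 (- \<sigma>)"
    have root: "?\<alpha> \<in> roots n" using r1_roots[OF i(1) j(1)] False \<sigma>pm by auto
    have ip0: "ip ?\<alpha> H = 0" using ip_r1_left[of i n j 1 "- \<sigma>" H] i(1) j(1) False ipH by simp
    have refl: "reflection ?\<alpha> \<nu> = \<nu>[i := \<mu>!i, j := \<sigma> * \<nu>!i]"
      using refl_r1[OF l\<nu> i(1) j(1)] False \<sigma>pm \<sigma>\<nu> by auto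
    have jS: "j \<in> ?S"
    proof -
      have "\<bar>\<mu>!j\<bar> \<noteq> \<bar>\<mu>!i\<bar>" using Wrho_inj'[OF W\<mu> i(1) j(1)] False by auto
      then show ?thesis using j by auto
    qed
    have "{k. k < n \<and> reflection ?\<alpha> \<nu> ! k \<noteq> \<mu>!k} \<subseteq> ?S - {i}"
    proof
      fix k assume "k \<in> {k. k < n \<and> reflection ?\<alpha> \<nu> ! k \<noteq> \<mu>!k}"
      then have k: "k < n" "reflection ?\<alpha> \<nu> ! k \<noteq> \<mu>!k" by auto
      have ki: "k \<noteq> i" using k l\<nu> False unfolding refl by auto
      have "\<nu>!k \<noteq> \<mu>!k"
      proof
        assume e: "\<nu>!k = \<mu>!k"
        have "k \<noteq> j" using jS e by auto
        then show False using k e l\<nu> ki unfolding refl by simp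
      qed
      then show "k \<in> ?S - {i}" using k ki by simp
    qed
    then have "card {k. k < n \<and> reflection ?\<alpha> \<nu> ! k \<noteq> \<mu>!k} \<le> card (?S - {i})"
      by (rule card_mono[rotated]) simp
    also have "\<dots> < card ?S" by (rule card_Diff1_less[OF finS iS])
    finally show ?thesis using root ip0 by blast
  qed
qed

lemma orbit_gen:
  assumes \<mu>: "\<mu> \<in> face n H"
  shows "\<nu> \<in> face n H \<Longrightarrow> w \<in> Wl n H \<Longrightarrow> \<nu> = w \<rho> \<Longrightarrow> \<exists>w'\<in>Wl n H. w' \<rho> = \<mu>"
proof (induction "card {k. k < n \<and> \<nu>!k \<noteq> \<mu>!k}" arbitrary: \<nu> w rule: less_induct)
  case less
  show ?case
  proof (cases "\<nu> = \<mu>")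
    case True
    then show ?thesis using less.prems by blast
  next
    case False
    obtain \<alpha> where \<alpha>: "\<alpha> \<in> roots n" "ip \<alpha> H = 0"
      "card {k. k < n \<and> reflection \<alpha> \<nu> ! k \<noteq> \<mu>!k} < card {k. k < n \<and> \<nu>!k \<noteq> \<mu>!k}"
      using orbit_step[OF \<mu> less.prems(1) False] by blast
    have f': "reflection \<alpha> \<nu> \<in> face n H" using refl_face[OF \<alpha>(1,2) less.prems(1)] .
    have w': "reflection \<alpha> \<circ> w \<in> Wl n H" using Wl_step[OF \<alpha>(1,2) less.prems(2)] .
    show ?thesis using less.hyps[OF \<alpha>(3) f' w'] less.prems(3) by simp
  qed
qed

lemma part2:
  assumes "\<rho>'' \<in> face n H"
  shows "face n H = (\<lambda>w. w \<rho>'') ` Wl n H"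
proof
  show "(\<lambda>w. w \<rho>'') ` Wl n H \<subseteq> face n H" using Wl_face assms by auto
  show "face n H \<subseteq> (\<lambda>w. w \<rho>'') ` Wl n H"
  proof
    fix \<mu> assume "\<mu> \<in> face n H"
    then obtain w' where "w' \<in> Wl n H" "w' \<rho>'' = \<mu>"
      using orbit_gen[of \<mu> n H \<rho>'' id \<rho>''] assms Wl_id by auto
    then show "\<mu> \<in> (\<lambda>w. w \<rho>'') ` Wl n H" by blast
  qed
qed



lemma sum_upt1: "sum_list (map f [1..<l+1]) = (\<Sum>i<l. f (Suc i))"
  by (induction l) auto

lemma sum_upt1': "sum_list (map f [Suc 0..<Suc l]) = (\<Sum>i<l. f (Suc i))"
  using sum_upt1[of f l] by simp

lemma count_rep: "count_list (replicate k c) v = (if c = v then k else 0)"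
  by (induction k) auto

lemma sorted_rep: "sorted_wrt (\<lambda>x y. y \<le> x) (replicate k (c::real))"
  by (induction k) auto

lemma sorted_concat_rep:
  assumes "sorted_wrt (\<lambda>a b. g b \<le> g a) xs"
  shows "sorted_wrt (\<lambda>x y. y \<le> (x::real)) (concat (map (\<lambda>t. replicate (f t) (g t)) xs))"
  using assms
proof (induction xs)
  case (Cons a xs)
  then show ?case by (auto simp: sorted_wrt_append sorted_rep)
qed simp

locale hv =
  fixes n :: nat and ps :: "(nat \<times> nat) list"
  assumes adm: "admissible n ps"
begin

abbreviation "l \<equiv> length ps"
definition pp where "pp t = fst (ps ! (t - 1))"
definition qq where "qq t = snd (ps ! (t - 1))"
definition AA where "AA = concat (map (\<lambda>t. replicate (pp t) (real t)) (rev [1..<l+1]))"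
definition BB where "BB = concat (map (\<lambda>t. replicate (qq t) (- real t)) [1..<l+1])"
definition rr where "rr = n - (\<Sum>(p,q)\<leftarrow>ps. p + q)"

lemma H_split: "Hvec n ps = AA @ replicate rr 0 @ BB"
  by (simp add: Hvec_def AA_def BB_def rr_def pp_def qq_def Let_def)

lemma sum_ps: "(\<Sum>(p,q)\<leftarrow>ps. p + q) = (\<Sum>i<l. pp (Suc i) + qq (Suc i))"
proof -
  have "(\<Sum>(p,q)\<leftarrow>ps. p + q) = (\<Sum>i = 0..<l. (\<lambda>(p,q). p + q) (ps ! i))"
    by (simp add: sum_list_sum_nth)
  also have "\<dots> = (\<Sum>i<l. pp (Suc i) + qq (Suc i))"
    by (rule sum.cong) (auto simp: pp_def qq_def split: prod.splits)
  finally show ?thesis .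
qed

lemma len_AA: "length AA = (\<Sum>i<l. pp (Suc i))"
  by (simp add: AA_def length_concat rev_map[symmetric] comp_def sum_upt1' del: upt_Suc)

lemma len_BB: "length BB = (\<Sum>i<l. qq (Suc i))"
  by (simp add: BB_def length_concat comp_def sum_upt1' del: upt_Suc)

lemma len_H: "length (Hvec n ps) = n"
proof -
  have "(\<Sum>(p,q)\<leftarrow>ps. p + q) \<le> n" using adm by (simp add: admissible_def)
  then show ?thesis
    by (simp add: H_split len_AA len_BB rr_def sum_ps sum.distrib)
qed

lemma sorted_H: "sorted_wrt (\<lambda>x y. y \<le> x) (Hvec n ps)"
proof -
  have sA: "sorted_wrt (\<lambda>x y. y \<le> x) AA" unfolding AA_def
    by (rule sorted_concat_rep) (simp add: sorted_wrt_rev sorted_wrt_upt[THEN sorted_wrt_mono_rel[rotated]] del: upt_Suc)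
  have sB: "sorted_wrt (\<lambda>x y. y \<le> x) BB" unfolding BB_def
    by (rule sorted_concat_rep) (simp add: sorted_wrt_upt[THEN sorted_wrt_mono_rel[rotated]] del: upt_Suc)
  have setA: "x \<in> set AA \<Longrightarrow> x > 0" for x by (auto simp: AA_def)
  have setB: "x \<in> set BB \<Longrightarrow> x < 0" for x by (auto simp: BB_def)
  have AB: "\<forall>x\<in>set AA. \<forall>y\<in>set BB. y \<le> x" using setA setB by force
  show ?thesis unfolding H_split using sA sB setA setB AB
    by (auto simp: sorted_wrt_append sorted_rep intro: less_imp_le)
qed

lemma set_H: "x \<in> set (Hvec n ps) \<Longrightarrow> x = 0 \<or> (\<exists>t. 1 \<le> t \<and> t \<le> l \<and> (x = real t \<or> x = - real t))"
  by (auto simp: H_split AA_def BB_def)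

lemma count_AA: "1 \<le> t \<Longrightarrow> count_list AA (real t) = (if t \<le> l then pp t else 0)"
proof -
  assume t: "1 \<le> t"
  have "count_list AA (real t) = (\<Sum>i<l. if Suc i = t then pp t else 0)"
    by (simp add: AA_def count_list_concat rev_map[symmetric] comp_def count_rep sum_upt1' del: upt_Suc
        cong: if_cong)
  also have "\<dots> = (\<Sum>i<l. if i = t - 1 then pp t else 0)"
    using t by (intro sum.cong) auto
  also have "\<dots> = (if t \<le> l then pp t else 0)" using t by auto
  finally show ?thesis .
qed

lemma count_BB: "1 \<le> t \<Longrightarrow> count_list BB (- real t) = (if t \<le> l then qq t else 0)"
proof -
  assume t: "1 \<le> t"
  have "count_list BB (- real t) = (\<Sum>i<l. if Suc i = t then qq t else 0)"
    by (simp add: BB_def count_list_concat comp_def count_rep sum_upt1' del: upt_Suc cong: if_cong)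
  also have "\<dots> = (\<Sum>i<l. if i = t - 1 then qq t else 0)"
    using t by (intro sum.cong) auto
  also have "\<dots> = (if t \<le> l then qq t else 0)" using t by auto
  finally show ?thesis .
qed

lemma count_pos: "1 \<le> t \<Longrightarrow> count_list (Hvec n ps) (real t) = (if t \<le> l then pp t else 0)"
proof -
  assume t: "1 \<le> t"
  have "real t \<notin> set BB" using t by (auto simp: BB_def)
  then show ?thesis using t by (simp add: H_split count_AA count_rep)
qed

lemma count_neg: "1 \<le> t \<Longrightarrow> count_list (Hvec n ps) (- real t) = (if t \<le> l then qq t else 0)"
proof -
  assume t: "1 \<le> t"
  have "- real t \<notin> set AA" using t by (auto simp: AA_def)
  then show ?thesis using t by (simp add: H_split count_BB count_rep)
qed

lemma adm_pq: "1 \<le> t \<Longrightarrow> t \<le> l \<Longrightarrow> (pp t = 0 \<longrightarrow> qq t = 1) \<and> (qq t = 0 \<longrightarrow> pp t = 1)"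
proof -
  assume "1 \<le> t" "t \<le> l"
  then have m: "ps ! (t - 1) \<in> set ps" by simp
  obtain p q where pq: "ps ! (t - 1) = (p, q)" by fastforce
  have "(p = 0 \<longrightarrow> q = 1) \<and> (q = 0 \<longrightarrow> p = 1)" using adm m pq unfolding admissible_def by fastforce
  then show ?thesis using pq by (simp add: pp_def qq_def)
qed

lemma count_card: "count_list xs v = card {i. i < length xs \<and> xs ! i = v}"
  by (simp add: count_list_eq_length_filter length_filter_conv_card eq_commute)

lemma H3: "k < n \<Longrightarrow> \<exists>m. m \<le> l \<and> \<bar>Hvec n ps ! k\<bar> = real m"
proof -
  assume "k < n"
  then have "Hvec n ps ! k \<in> set (Hvec n ps)" using len_H by simp
  from set_H[OF this] show ?thesis by auto
qed

lemma in_set_idx: "v \<in> set (Hvec n ps) \<Longrightarrow> \<exists>k<n. Hvec n ps ! k = v"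
  using len_H by (metis in_set_conv_nth)

lemma H4: "1 \<le> t \<Longrightarrow> t \<le> l \<Longrightarrow> \<exists>k<n. \<bar>Hvec n ps ! k\<bar> = real t"
proof -
  assume t: "1 \<le> t" "t \<le> l"
  show ?thesis
  proof (cases "pp t = 0")
    case True
    then have "count_list (Hvec n ps) (- real t) \<noteq> 0" using adm_pq[OF t] count_neg[OF t(1)] t by simp
    then have "- real t \<in> set (Hvec n ps)" using count_list_0_iff by metis
    then show ?thesis using in_set_idx by force
  next
    case False
    then have "count_list (Hvec n ps) (real t) \<noteq> 0" using count_pos[OF t(1)] t by simp
    then have "real t \<in> set (Hvec n ps)" using count_list_0_iff by metis
    then show ?thesis using in_set_idx by force
  qed
qed

lemma count_two: "a < length xs \<Longrightarrow> b < length xs \<Longrightarrow> a \<noteq> b \<Longrightarrow> xs!a = v \<Longrightarrow> xs!b = v \<Longrightarrow> count_list xs v \<ge> 2"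
proof -
  assume "a < length xs" "b < length xs" "a \<noteq> b" "xs!a = v" "xs!b = v"
  then have "{a, b} \<subseteq> {i. i < length xs \<and> xs ! i = v}" by auto
  then have "card {a, b} \<le> card {i. i < length xs \<and> xs ! i = v}" by (rule card_mono[rotated]) simp
  then show ?thesis using \<open>a \<noteq> b\<close> by (simp add: count_card)
qed

lemma H5:
  assumes "a < n" "b < n" "a \<noteq> b" "Hvec n ps ! a = Hvec n ps ! b" "Hvec n ps ! a \<noteq> 0"
  shows "\<exists>k<n. Hvec n ps ! k = - (Hvec n ps ! a)"
proof -
  let ?H = "Hvec n ps"
  have c2: "count_list ?H (?H!a) \<ge> 2" using count_two[of a ?H b] assms len_H by simp
  have "?H!a \<in> set ?H" using assms len_H by simp
  then obtain t where t: "1 \<le> t" "t \<le> l" "?H!a = real t \<or> ?H!a = - real t"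
    using set_H assms(5) by blast
  from t(3) show ?thesis
  proof
    assume e: "?H!a = real t"
    then have "pp t \<ge> 2" using c2 count_pos[OF t(1)] t(2) by simp
    then have "qq t \<noteq> 0" using adm_pq[OF t(1,2)] by auto
    then have "count_list ?H (- real t) \<noteq> 0" using count_neg[OF t(1)] t(2) by simp
    then have "- real t \<in> set ?H" using count_list_0_iff by metis
    then show ?thesis using in_set_idx e by force
  next
    assume e: "?H!a = - real t"
    then have "qq t \<ge> 2" using c2 count_neg[OF t(1)] t(2) by simp
    then have "pp t \<noteq> 0" using adm_pq[OF t(1,2)] by auto
    then have "count_list ?H (real t) \<noteq> 0" using count_pos[OF t(1)] t(2) by simp
    then have "real t \<in> set ?H" using count_list_0_iff by metis
    then show ?thesis using in_set_idx e by force
  qed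
qed

end

lemma Hvec_inj:
  assumes a1: "admissible n ps" and a2: "admissible n ps'" and e: "Hvec n ps = Hvec n ps'"
  shows "ps = ps'"
proof -
  interpret A: hv n ps by unfold_locales (rule a1)
  interpret B: hv n ps' by unfold_locales (rule a2)
  have cp: "1 \<le> t \<Longrightarrow> (if t \<le> length ps then A.pp t else 0) = (if t \<le> length ps' then B.pp t else 0)" for t
    using A.count_pos B.count_pos e by metis
  have cq: "1 \<le> t \<Longrightarrow> (if t \<le> length ps then A.qq t else 0) = (if t \<le> length ps' then B.qq t else 0)" for t
    using A.count_neg B.count_neg e by metis
  have nz1: "1 \<le> t \<Longrightarrow> t \<le> length ps \<Longrightarrow> A.pp t + A.qq t \<noteq> 0" for t using A.adm_pq by fastforce
  have nz2: "1 \<le> t \<Longrightarrow> t \<le> length ps' \<Longrightarrow> B.pp t + B.qq t \<noteq> 0" for t using B.adm_pq by fastforce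
  have len: "length ps = length ps'"
  proof (rule ccontr)
    assume "length ps \<noteq> length ps'"
    then consider "length ps < length ps'" | "length ps' < length ps" by linarith
    then show False
    proof cases
      case 1
      then show False using cp[of "length ps'"] cq[of "length ps'"] nz2[of "length ps'"] by auto
    next
      case 2
      then show False using cp[of "length ps"] cq[of "length ps"] nz1[of "length ps"] by auto
    qed
  qed
  show ?thesis
  proof (rule nth_equalityI[OF len])
    fix i assume i: "i < length ps"
    have "A.pp (Suc i) = B.pp (Suc i)" "A.qq (Suc i) = B.qq (Suc i)"
      using cp[of "Suc i"] cq[of "Suc i"] i len by auto
    then show "ps ! i = ps' ! i" by (simp add: A.pp_def B.pp_def A.qq_def B.qq_def prod_eq_iff)
  qed
qed



lemma block_lohi:
  assumes len: "length H = n" and nat: "\<forall>k<n. \<exists>m::nat. \<bar>H!k\<bar> = real m"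
  shows "block H t = real ` {lo n H (real t)<..hi n H (real t)}"
proof -
  have disj: "\<forall>i\<in>I. \<forall>j\<in>I. i \<noteq> j \<longrightarrow> {k. k < n \<and> \<bar>H!k\<bar> = real i} \<inter> {k. k < n \<and> \<bar>H!k\<bar> = real j} = {}"
    for I :: "nat set" by auto
  have u1: "{k. k < n \<and> \<bar>H!k\<bar> < real t} = (\<Union>s\<in>{..<t}. {k. k < n \<and> \<bar>H!k\<bar> = real s})"
    using nat by force
  have u2: "{k. k < n \<and> \<bar>H!k\<bar> \<le> real t} = (\<Union>s\<in>{..t}. {k. k < n \<and> \<bar>H!k\<bar> = real s})"
    using nat by force
  have s1: "(\<Sum>s<t. mcount H s) = lo n H (real t)"
    unfolding lo_def u1 mcount_def len by (subst card_UN_disjoint) (auto)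
  have s2: "(\<Sum>s\<le>t. mcount H s) = hi n H (real t)"
    unfolding hi_def u2 mcount_def len by (subst card_UN_disjoint) (auto)
  have "{lo n H (real t) + 1..hi n H (real t)} = {lo n H (real t)<..hi n H (real t)}" by auto
  then show ?thesis unfolding block_def s1 s2 by simp
qed

lemma D_intro:
  assumes len: "length \<nu> = n"
    and b: "\<And>i. i < n \<Longrightarrow> real (lo n H \<bar>H!i\<bar>) < \<bar>\<nu>!i\<bar> \<and> \<bar>\<nu>!i\<bar> \<le> real (hi n H \<bar>H!i\<bar>)"
    and nat: "\<And>i. i < n \<Longrightarrow> \<exists>m::nat. \<bar>\<nu>!i\<bar> = real m"
    and s: "\<And>i. i < n \<Longrightarrow> H!i \<noteq> 0 \<Longrightarrow> sgn (\<nu>!i) = sgn (H!i)"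
    and inj: "\<And>i j. i < n \<Longrightarrow> j < n \<Longrightarrow> i \<noteq> j \<Longrightarrow> \<bar>H!i\<bar> = \<bar>H!j\<bar> \<Longrightarrow> \<bar>\<nu>!i\<bar> \<noteq> \<bar>\<nu>!j\<bar>"
  shows "\<nu> \<in> D n H"
proof -
  have inj': "inj_on (\<lambda>i. \<bar>\<nu>!i\<bar>) {..<n}"
  proof (rule inj_onI, rule ccontr)
    fix i j assume ij: "i \<in> {..<n}" "j \<in> {..<n}" "\<bar>\<nu>!i\<bar> = \<bar>\<nu>!j\<bar>" "i \<noteq> j"
    then have i: "i < n" and j: "j < n" by auto
    show False
    proof (cases "\<bar>H!i\<bar> = \<bar>H!j\<bar>")
      case True then show ?thesis using inj[OF i j ij(4)] ij(3) by simp
    next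
      case False
      then consider "\<bar>H!i\<bar> < \<bar>H!j\<bar>" | "\<bar>H!j\<bar> < \<bar>H!i\<bar>" by linarith
      then show False
      proof cases
        case 1
        have "\<bar>\<nu>!i\<bar> \<le> real (hi n H \<bar>H!i\<bar>)" using b[OF i] by simp
        also have "\<dots> \<le> real (lo n H \<bar>H!j\<bar>)" using hi_le_lo[OF 1] by simp
        also have "\<dots> < \<bar>\<nu>!j\<bar>" using b[OF j] by simp
        finally show False using ij by simp
      next
        case 2
        have "\<bar>\<nu>!j\<bar> \<le> real (hi n H \<bar>H!j\<bar>)" using b[OF j] by simp
        also have "\<dots> \<le> real (lo n H \<bar>H!i\<bar>)" using hi_le_lo[OF 2] by simp
        also have "\<dots> < \<bar>\<nu>!i\<bar>" using b[OF i] by simp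
        finally show False using ij by simp
      qed
    qed
  qed
  have sub: "(\<lambda>i. \<bar>\<nu>!i\<bar>) ` {..<n} \<subseteq> real ` {1..n}"
  proof
    fix x assume "x \<in> (\<lambda>i. \<bar>\<nu>!i\<bar>) ` {..<n}"
    then obtain i where i: "i < n" "x = \<bar>\<nu>!i\<bar>" by auto
    obtain m where m: "\<bar>\<nu>!i\<bar> = real m" using nat[OF i(1)] by auto
    have "real (lo n H \<bar>H!i\<bar>) < real m" "real m \<le> real (hi n H \<bar>H!i\<bar>)" using b[OF i(1)] m by auto
    then have "1 \<le> m" "m \<le> n" using hi_le_n[of n H "\<bar>H!i\<bar>"] by linarith+
    then show "x \<in> real ` {1..n}" using i m by auto
  qed
  have "(\<lambda>i. \<bar>\<nu>!i\<bar>) ` {..<n} = real ` {1..n}"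
    by (rule card_subset_eq[OF _ sub]) (simp_all add: card_image[OF inj'] card_image)
  then have "\<nu> \<in> Wrho n" using len by (simp add: Wrho_char)
  then show ?thesis unfolding D_def using b s by auto
qed

lemma D_dec:
  assumes \<nu>: "\<nu> \<in> D n H" and sorted: "\<And>i j. i < j \<Longrightarrow> j < n \<Longrightarrow> H!j \<le> H!i"
    and same: "\<And>i j. i < j \<Longrightarrow> j < n \<Longrightarrow> H!i = H!j \<Longrightarrow> \<nu>!j < \<nu>!i"
    and ij: "i < j" "j < n"
  shows "\<nu>!j < \<nu>!i"
proof -
  have i: "i < n" using ij by simp
  note b1 = DE(1)[OF \<nu>] and b2 = DE(2)[OF \<nu>] and sg = DE(3)[OF \<nu>]
  show ?thesis
  proof (cases "H!i = H!j")
    case True then show ?thesis using same ij by simp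
  next
    case False
    then have lt: "H!j < H!i" using sorted[OF ij] by simp
    consider "H!i > 0" "H!j \<ge> 0" | "H!j < 0" "H!i \<le> 0" | "H!i > 0" "H!j < 0" using lt by linarith
    then show ?thesis
    proof cases
      case 1
      have pos: "\<nu>!i > 0" using sg[OF i] 1 by (auto simp: sgn_if split: if_splits)
      have "\<nu>!j \<le> \<bar>\<nu>!j\<bar>" by simp
      also have "\<dots> \<le> real (hi n H \<bar>H!j\<bar>)" using b2[OF ij(2)] .
      also have "\<dots> \<le> real (lo n H \<bar>H!i\<bar>)" using hi_le_lo[of "\<bar>H!j\<bar>" "\<bar>H!i\<bar>"] 1 lt by simp
      also have "\<dots> < \<bar>\<nu>!i\<bar>" using b1[OF i] .
      finally show ?thesis using pos by simp
    next
      case 2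
      have neg: "\<nu>!j < 0" using sg[OF ij(2)] 2 by (auto simp: sgn_if split: if_splits)
      have "- \<bar>\<nu>!i\<bar> \<le> \<nu>!i" by simp
      have "real (hi n H \<bar>H!i\<bar>) \<le> real (lo n H \<bar>H!j\<bar>)" using hi_le_lo[of "\<bar>H!i\<bar>" "\<bar>H!j\<bar>"] 2 lt by simp
      then have "\<bar>\<nu>!i\<bar> < \<bar>\<nu>!j\<bar>" using b2[OF i] b1[OF ij(2)] by linarith
      then show ?thesis using neg by linarith
    next
      case 3
      have "\<nu>!i > 0" using sg[OF i] 3 by (auto simp: sgn_if split: if_splits)
      moreover have "\<nu>!j < 0" using sg[OF ij(2)] 3 by (auto simp: sgn_if split: if_splits)
      ultimately show ?thesis by simp
    qed
  qed
qed

definition dA :: "real list \<Rightarrow> nat \<Rightarrow> nat" where "dA H i = card {j. j < i \<and> H!j = H!i}"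
definition eB :: "nat \<Rightarrow> real list \<Rightarrow> nat \<Rightarrow> nat" where "eB n H i = card {j. i < j \<and> j < n \<and> H!j = H!i}"
definition cnt :: "nat \<Rightarrow> real list \<Rightarrow> real \<Rightarrow> nat" where "cnt n H v = card {j. j < n \<and> H!j = v}"

definition muA :: "nat \<Rightarrow> real list \<Rightarrow> real list" where
  "muA n H = map (\<lambda>i. if H!i \<ge> 0 then real (hi n H \<bar>H!i\<bar>) - real (dA H i)
                      else - (real (lo n H \<bar>H!i\<bar>) + 1 + real (dA H i))) [0..<n]"
definition muB :: "nat \<Rightarrow> real list \<Rightarrow> real list" where
  "muB n H = map (\<lambda>i. if H!i > 0 then real (lo n H \<bar>H!i\<bar>) + 1 + real (eB n H i)
                      else - (real (hi n H \<bar>H!i\<bar>) - real (eB n H i))) [0..<n]"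

lemma dA_lt: "i < n \<Longrightarrow> dA H i < cnt n H (H!i)"
  unfolding dA_def cnt_def by (rule psubset_card_mono) auto

lemma eB_lt: "i < n \<Longrightarrow> eB n H i < cnt n H (H!i)"
  unfolding eB_def cnt_def by (rule psubset_card_mono) auto

lemma dA_mono: "i < j \<Longrightarrow> H!i = H!j \<Longrightarrow> dA H i < dA H j"
  unfolding dA_def by (rule psubset_card_mono) auto

lemma eB_mono: "i < j \<Longrightarrow> j < n \<Longrightarrow> H!i = H!j \<Longrightarrow> eB n H j < eB n H i"
  unfolding eB_def by (rule psubset_card_mono) auto

lemma cnt_le: "cnt n H v \<le> hi n H \<bar>v\<bar> - lo n H \<bar>v\<bar>"
proof -
  have "cnt n H v \<le> card {k. k < n \<and> \<bar>H!k\<bar> = \<bar>v\<bar>}" unfolding cnt_def by (rule card_mono) auto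
  then show ?thesis using hi_lo[of n H "\<bar>v\<bar>"] by simp
qed

lemma cnt_pm: "v \<noteq> 0 \<Longrightarrow> cnt n H v + cnt n H (-v) \<le> hi n H \<bar>v\<bar> - lo n H \<bar>v\<bar>"
proof -
  assume v: "v \<noteq> 0"
  have "cnt n H v + cnt n H (-v) = card ({j. j < n \<and> H!j = v} \<union> {j. j < n \<and> H!j = -v})"
    unfolding cnt_def using v by (subst card_Un_disjoint) auto
  also have "\<dots> \<le> card {k. k < n \<and> \<bar>H!k\<bar> = \<bar>v\<bar>}" by (rule card_mono) auto
  finally show ?thesis using hi_lo[of n H "\<bar>v\<bar>"] by simp
qed

lemma muA_nth: "i < n \<Longrightarrow> muA n H ! i = (if H!i \<ge> 0 then real (hi n H \<bar>H!i\<bar>) - real (dA H i)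
                      else - (real (lo n H \<bar>H!i\<bar>) + 1 + real (dA H i)))"
  by (simp add: muA_def)
lemma muB_nth: "i < n \<Longrightarrow> muB n H ! i = (if H!i > 0 then real (lo n H \<bar>H!i\<bar>) + 1 + real (eB n H i)
                      else - (real (hi n H \<bar>H!i\<bar>) - real (eB n H i)))"
  by (simp add: muB_def)

lemma muA_opp: "a < n \<Longrightarrow> b < n \<Longrightarrow> H!a > 0 \<Longrightarrow> H!b = - H!a \<Longrightarrow> \<bar>muA n H ! b\<bar> < \<bar>muA n H ! a\<bar>"
proof -
  assume a: "a < n" and b: "b < n" and p: "H!a > 0" and e: "H!b = - H!a"
  have 1: "dA H a < cnt n H (H!a)" using dA_lt[OF a] .
  have 2: "dA H b < cnt n H (- H!a)" using dA_lt[of b n H] b e by simp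
  have 3: "cnt n H (H!a) + cnt n H (- H!a) \<le> hi n H \<bar>H!a\<bar> - lo n H \<bar>H!a\<bar>" using cnt_pm[of "H!a" n H] p by simp
  have 4: "lo n H \<bar>H!a\<bar> \<le> hi n H \<bar>H!a\<bar>" using hi_lo[of n H "\<bar>H!a\<bar>"] by simp
  have eb: "\<bar>H!b\<bar> = \<bar>H!a\<bar>" using e by simp
  show ?thesis using 1 2 3 4 p e unfolding muA_nth[OF a] muA_nth[OF b] eb by simp
qed

lemma muB_opp: "a < n \<Longrightarrow> b < n \<Longrightarrow> H!a > 0 \<Longrightarrow> H!b = - H!a \<Longrightarrow> \<bar>muB n H ! a\<bar> < \<bar>muB n H ! b\<bar>"
proof -
  assume a: "a < n" and b: "b < n" and p: "H!a > 0" and e: "H!b = - H!a"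
  have 1: "eB n H a < cnt n H (H!a)" using eB_lt[OF a] .
  have 2: "eB n H b < cnt n H (- H!a)" using eB_lt[of b n H] b e by simp
  have 3: "cnt n H (H!a) + cnt n H (- H!a) \<le> hi n H \<bar>H!a\<bar> - lo n H \<bar>H!a\<bar>" using cnt_pm[of "H!a" n H] p by simp
  have 4: "lo n H \<bar>H!a\<bar> \<le> hi n H \<bar>H!a\<bar>" using hi_lo[of n H "\<bar>H!a\<bar>"] by simp
  have eb: "\<bar>H!b\<bar> = \<bar>H!a\<bar>" using e by simp
  show ?thesis using 1 2 3 4 p e unfolding muB_nth[OF a] muB_nth[OF b] eb by simp
qed

lemma muA_D: "muA n H \<in> D n H"
proof (rule D_intro)
  show "length (muA n H) = n" by (simp add: muA_def)
  fix i assume i: "i < n"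
  have 1: "dA H i < cnt n H (H!i)" using dA_lt[OF i] .
  have 2: "cnt n H (H!i) \<le> hi n H \<bar>H!i\<bar> - lo n H \<bar>H!i\<bar>" by (rule cnt_le)
  have 4: "lo n H \<bar>H!i\<bar> \<le> hi n H \<bar>H!i\<bar>" using hi_lo[of n H "\<bar>H!i\<bar>"] by simp
  show "real (lo n H \<bar>H!i\<bar>) < \<bar>muA n H ! i\<bar> \<and> \<bar>muA n H ! i\<bar> \<le> real (hi n H \<bar>H!i\<bar>)"
    using 1 2 4 unfolding muA_nth[OF i] by auto
  show "\<exists>m::nat. \<bar>muA n H ! i\<bar> = real m"
  proof (cases "H!i \<ge> 0")
    case True
    then show ?thesis using 1 2 4 unfolding muA_nth[OF i]
      by (intro exI[of _ "hi n H \<bar>H!i\<bar> - dA H i"]) auto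
  next
    case False
    then show ?thesis using 1 2 4 unfolding muA_nth[OF i]
      by (intro exI[of _ "lo n H \<bar>H!i\<bar> + 1 + dA H i"]) auto
  qed
  show "H!i \<noteq> 0 \<Longrightarrow> sgn (muA n H ! i) = sgn (H!i)"
    using 1 2 4 unfolding muA_nth[OF i] by (auto simp: sgn_if)
next
  fix i j assume i: "i < n" and j: "j < n" and ij: "i \<noteq> j" and e: "\<bar>H!i\<bar> = \<bar>H!j\<bar>"
  show "\<bar>muA n H ! i\<bar> \<noteq> \<bar>muA n H ! j\<bar>"
  proof (cases "H!i = H!j")
    case True
    have 1: "dA H i < cnt n H (H!i)" using dA_lt[OF i] .
    have h1': "dA H j < cnt n H (H!i)" using dA_lt[OF j] True by simp
    have 2: "cnt n H (H!i) \<le> hi n H \<bar>H!i\<bar> - lo n H \<bar>H!i\<bar>" by (rule cnt_le)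
    have "dA H i \<noteq> dA H j" using dA_mono[of i j H] dA_mono[of j i H] True ij by fastforce
    then show ?thesis using 1 h1' 2 True unfolding muA_nth[OF i] muA_nth[OF j] by auto
  next
    case False
    then have o: "H!j = - H!i" "H!i \<noteq> 0" using e by (auto simp: abs_if split: if_splits)
    show ?thesis
    proof (cases "H!i > 0")
      case True then show ?thesis using muA_opp[OF i j True o(1)] by simp
    next
      case False
      then have "H!j > 0" "H!i = - H!j" using o by auto
      then show ?thesis using muA_opp[OF j i] by fastforce
    qed
  qed
qed

lemma muB_D: "muB n H \<in> D n H"
proof (rule D_intro)
  show "length (muB n H) = n" by (simp add: muB_def)
  fix i assume i: "i < n"
  have 1: "eB n H i < cnt n H (H!i)" using eB_lt[OF i] .
  have 2: "cnt n H (H!i) \<le> hi n H \<bar>H!i\<bar> - lo n H \<bar>H!i\<bar>" by (rule cnt_le)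
  have 4: "lo n H \<bar>H!i\<bar> \<le> hi n H \<bar>H!i\<bar>" using hi_lo[of n H "\<bar>H!i\<bar>"] by simp
  show "real (lo n H \<bar>H!i\<bar>) < \<bar>muB n H ! i\<bar> \<and> \<bar>muB n H ! i\<bar> \<le> real (hi n H \<bar>H!i\<bar>)"
    using 1 2 4 unfolding muB_nth[OF i] by auto
  show "\<exists>m::nat. \<bar>muB n H ! i\<bar> = real m"
  proof (cases "H!i > 0")
    case True
    then show ?thesis using 1 2 4 unfolding muB_nth[OF i]
      by (intro exI[of _ "lo n H \<bar>H!i\<bar> + 1 + eB n H i"]) auto
  next
    case False
    then show ?thesis using 1 2 4 unfolding muB_nth[OF i]
      by (intro exI[of _ "hi n H \<bar>H!i\<bar> - eB n H i"]) auto
  qed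
  show "H!i \<noteq> 0 \<Longrightarrow> sgn (muB n H ! i) = sgn (H!i)"
    using 1 2 4 unfolding muB_nth[OF i] by (auto simp: sgn_if)
next
  fix i j assume i: "i < n" and j: "j < n" and ij: "i \<noteq> j" and e: "\<bar>H!i\<bar> = \<bar>H!j\<bar>"
  show "\<bar>muB n H ! i\<bar> \<noteq> \<bar>muB n H ! j\<bar>"
  proof (cases "H!i = H!j")
    case True
    have 1: "eB n H i < cnt n H (H!i)" using eB_lt[OF i] .
    have h1': "eB n H j < cnt n H (H!i)" using eB_lt[OF j] True by simp
    have 2: "cnt n H (H!i) \<le> hi n H \<bar>H!i\<bar> - lo n H \<bar>H!i\<bar>" by (rule cnt_le)
    have "eB n H i \<noteq> eB n H j" using eB_mono[of i j n H] eB_mono[of j i n H] True ij i j by fastforce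
    then show ?thesis using 1 h1' 2 True unfolding muB_nth[OF i] muB_nth[OF j] by auto
  next
    case False
    then have o: "H!j = - H!i" "H!i \<noteq> 0" using e by (auto simp: abs_if split: if_splits)
    show ?thesis
    proof (cases "H!i > 0")
      case True then show ?thesis using muB_opp[OF i j True o(1)] by simp
    next
      case False
      then have "H!j > 0" "H!i = - H!j" using o by auto
      then show ?thesis using muB_opp[OF j i] by fastforce
    qed
  qed
qed

lemma muA_Ck:
  assumes sorted: "\<And>i j. i < j \<Longrightarrow> j < n \<Longrightarrow> H!j \<le> H!i"
  shows "muA n H \<in> Ck n"
proof -
  have "\<forall>i j. i < j \<and> j < n \<longrightarrow> muA n H ! j < muA n H ! i"
  proof (intro allI impI)
    fix i j assume ij: "i < j \<and> j < n"
    show "muA n H ! j < muA n H ! i"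
    proof (rule D_dec[OF muA_D sorted])
      fix i j assume "i < j" "j < n" "H!i = H!j"
      then show "muA n H ! j < muA n H ! i" using dA_mono[of i j H] by (simp add: muA_nth)
    qed (use ij in auto)
  qed
  moreover have "length (muA n H) = n" by (simp add: muA_def)
  ultimately show ?thesis unfolding Ck_def by (auto intro: less_imp_le)
qed

lemma muB_Ck:
  assumes sorted: "\<And>i j. i < j \<Longrightarrow> j < n \<Longrightarrow> H!j \<le> H!i"
  shows "muB n H \<in> Ck n"
proof -
  have "\<forall>i j. i < j \<and> j < n \<longrightarrow> muB n H ! j < muB n H ! i"
  proof (intro allI impI)
    fix i j assume ij: "i < j \<and> j < n"
    show "muB n H ! j < muB n H ! i"
    proof (rule D_dec[OF muB_D sorted])
      fix i j assume "i < j" "j < n" "H!i = H!j"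
      then show "muB n H ! j < muB n H ! i" using eB_mono[of i j n H] by (simp add: muB_nth)
    qed (use ij in auto)
  qed
  moreover have "length (muB n H) = n" by (simp add: muB_def)
  ultimately show ?thesis unfolding Ck_def by (auto intro: less_imp_le)
qed



lemma muA_pos: "i < n \<Longrightarrow> H!i \<ge> 0 \<Longrightarrow> muA n H ! i > 0"
  using dA_lt[of i n H] cnt_le[of n H "H!i"] by (simp add: muA_nth)
lemma muA_neg: "i < n \<Longrightarrow> H!i < 0 \<Longrightarrow> muA n H ! i < 0"
  by (simp add: muA_nth)
lemma muB_pos: "i < n \<Longrightarrow> H!i > 0 \<Longrightarrow> muB n H ! i > 0"
  by (simp add: muB_nth)
lemma muB_neg: "i < n \<Longrightarrow> H!i \<le> 0 \<Longrightarrow> muB n H ! i < 0"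
  using eB_lt[of i n H] cnt_le[of n H "H!i"] by (simp add: muB_nth)

context hv begin

lemma nat_H: "\<forall>k<n. \<exists>m::nat. \<bar>Hvec n ps ! k\<bar> = real m"
  using H3 by blast

lemma sorted_H': "i < j \<Longrightarrow> j < n \<Longrightarrow> Hvec n ps ! j \<le> Hvec n ps ! i"
  using sorted_H len_H by (simp add: sorted_wrt_iff_nth_less)

lemma descr_eq: "face_descr n ps = D n (Hvec n ps)"
proof -
  let ?H = "Hvec n ps"
  have blk: "block ?H t = real ` {lo n ?H (real t)<..hi n ?H (real t)}" for t
    using block_lohi[OF len_H nat_H] .
  have z: "{i. i < n \<and> ?H!i = 0} = {i. i < n \<and> \<bar>?H!i\<bar> = real 0}" by auto
  show ?thesis
  proof
    show "D n ?H \<subseteq> face_descr n ps"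
    proof
      fix \<mu> assume \<mu>: "\<mu> \<in> D n ?H"
      have len: "length \<mu> = n" using \<mu> Wrho_len by (simp add: D_def)
      show "\<mu> \<in> face_descr n ps"
        unfolding face_descr_def Let_def
      proof (intro CollectI conjI ballI allI impI len)
        fix t assume t: "t \<in> {1..length ps}"
        show "(\<lambda>i. \<bar>\<mu>!i\<bar>) ` {i. i < n \<and> \<bar>?H!i\<bar> = real t} = block ?H t"
          using IMG[OF \<mu>] blk by simp
        fix i assume i: "i < n" "\<bar>?H!i\<bar> = real t"
        then have "?H!i \<noteq> 0" using t by auto
        then show "sgn (\<mu>!i) = sgn (?H!i)" using DE(3)[OF \<mu> i(1)] by simp
      next
        show "(\<lambda>i. \<bar>\<mu>!i\<bar>) ` {i. i < n \<and> ?H!i = 0} = block ?H 0"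
        proof -
          have e1: "block ?H 0 = real ` {lo n ?H 0<..hi n ?H 0}" using blk[of 0] by simp
          have z': "{i. i < n \<and> ?H!i = 0} = {i. i < n \<and> \<bar>?H!i\<bar> = 0}" by auto
          show ?thesis unfolding e1 z' by (rule IMG[OF \<mu>])
        qed
      qed
    qed
    show "face_descr n ps \<subseteq> D n ?H"
    proof
      fix \<mu> assume \<mu>: "\<mu> \<in> face_descr n ps"
      have len: "length \<mu> = n" using \<mu> by (simp add: face_descr_def Let_def)
      have pos: "\<And>t. t \<in> {1..length ps} \<Longrightarrow> (\<lambda>i. \<bar>\<mu>!i\<bar>) ` {i. i < n \<and> \<bar>?H!i\<bar> = real t} = block ?H t"
        using \<mu> by (simp add: face_descr_def Let_def)
      have sg: "\<And>t i. t \<in> {1..length ps} \<Longrightarrow> i < n \<Longrightarrow> \<bar>?H!i\<bar> = real t \<Longrightarrow> sgn (\<mu>!i) = sgn (?H!i)"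
        using \<mu> by (simp add: face_descr_def Let_def)
      have zero: "(\<lambda>i. \<bar>\<mu>!i\<bar>) ` {i. i < n \<and> ?H!i = 0} = block ?H 0"
        using \<mu> by (simp add: face_descr_def Let_def)
      have cls: "(\<lambda>k. \<bar>\<mu>!k\<bar>) ` {k. k < n \<and> \<bar>?H!k\<bar> = \<bar>?H!i\<bar>}
                  = real ` {lo n ?H \<bar>?H!i\<bar><..hi n ?H \<bar>?H!i\<bar>}" if i: "i < n" for i
      proof -
        obtain m where m: "m \<le> length ps" "\<bar>?H!i\<bar> = real m" using H3[OF i] by auto
        show ?thesis
        proof (cases "m = 0")
          case True
          have e1: "block ?H 0 = real ` {lo n ?H 0<..hi n ?H 0}" using blk[of 0] by simp
          have z': "{k. k < n \<and> \<bar>?H!k\<bar> = \<bar>?H!i\<bar>} = {i. i < n \<and> ?H!i = 0}" using m True by auto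
          show ?thesis unfolding z' zero e1 using m True by simp
        next
          case False
          then show ?thesis using pos[of m] blk[of m] m by simp
        qed
      qed
      have mem: "\<bar>\<mu>!i\<bar> \<in> real ` {lo n ?H \<bar>?H!i\<bar><..hi n ?H \<bar>?H!i\<bar>}" if i: "i < n" for i
        using cls[OF i, symmetric] i by blast
      show "\<mu> \<in> D n ?H"
      proof (rule D_intro[OF len])
        fix i assume i: "i < n"
        from mem[OF i] obtain x where x: "lo n ?H \<bar>?H!i\<bar> < x" "x \<le> hi n ?H \<bar>?H!i\<bar>" "\<bar>\<mu>!i\<bar> = real x"
          by auto
        show "real (lo n ?H \<bar>?H!i\<bar>) < \<bar>\<mu>!i\<bar> \<and> \<bar>\<mu>!i\<bar> \<le> real (hi n ?H \<bar>?H!i\<bar>)" using x by simp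
        show "\<exists>m::nat. \<bar>\<mu>!i\<bar> = real m" using x by blast
        assume nz: "?H!i \<noteq> 0"
        obtain m where m: "m \<le> length ps" "\<bar>?H!i\<bar> = real m" using H3[OF i] by auto
        then have "m \<in> {1..length ps}" using nz by (cases m) auto
        then show "sgn (\<mu>!i) = sgn (?H!i)" using sg i m by blast
      next
        fix i j assume i: "i < n" and j: "j < n" and ij: "i \<noteq> j" and e: "\<bar>?H!i\<bar> = \<bar>?H!j\<bar>"
        let ?K = "{k. k < n \<and> \<bar>?H!k\<bar> = \<bar>?H!i\<bar>}"
        have "card ((\<lambda>k. \<bar>\<mu>!k\<bar>) ` ?K) = card ?K"
          using cls[OF i] hi_lo[of n ?H "\<bar>?H!i\<bar>"] by (simp add: card_image)
        then have "inj_on (\<lambda>k. \<bar>\<mu>!k\<bar>) ?K" by (rule eq_card_imp_inj_on[rotated]) simp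
        then show "\<bar>\<mu>!i\<bar> \<noteq> \<bar>\<mu>!j\<bar>" using i j ij e by (auto dest: inj_onD)
      qed
    qed
  qed
qed

lemma muA_F: "muA n (Hvec n ps) \<in> face n (Hvec n ps) \<inter> Ck n"
  using muA_D muA_Ck[OF sorted_H'] face_eq_D by blast
lemma muB_F: "muB n (Hvec n ps) \<in> face n (Hvec n ps) \<inter> Ck n"
  using muB_D muB_Ck[OF sorted_H'] face_eq_D by blast

lemma T:
  assumes F: "face n (Hvec n ps) \<inter> Ck n \<subseteq> face n G"
  shows "a < n \<Longrightarrow> Hvec n ps ! a > 0 \<Longrightarrow> G!a \<ge> 0"
    and "a < n \<Longrightarrow> Hvec n ps ! a < 0 \<Longrightarrow> G!a \<le> 0"
    and "a < n \<Longrightarrow> Hvec n ps ! a = 0 \<Longrightarrow> G!a = 0"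
    and "a < n \<Longrightarrow> b < n \<Longrightarrow> \<bar>Hvec n ps ! a\<bar> < \<bar>Hvec n ps ! b\<bar> \<Longrightarrow> \<bar>G!a\<bar> \<le> \<bar>G!b\<bar>"
    and "a < n \<Longrightarrow> b < n \<Longrightarrow> \<bar>Hvec n ps ! a\<bar> = \<bar>Hvec n ps ! b\<bar> \<Longrightarrow> \<bar>G!a\<bar> = \<bar>G!b\<bar>"
proof -
  let ?H = "Hvec n ps"
  have fA: "muA n ?H \<in> face n G" using muA_F F by blast
  have fB: "muB n ?H \<in> face n G" using muB_F F by blast
  have DA: "muA n ?H \<in> D n ?H" by (rule muA_D)
  show t1: "G!a \<ge> 0" if "a < n" "?H!a > 0" for a
    using LOC1[OF fA that(1)] muA_pos[of a n ?H] that by (simp add: zero_le_mult_iff)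
  show t2: "G!a \<le> 0" if "a < n" "?H!a < 0" for a
    using LOC1[OF fA that(1)] muA_neg[of a n ?H] that by (simp add: zero_le_mult_iff)
  show t3: "G!a = 0" if "a < n" "?H!a = 0" for a
  proof -
    have "G!a \<ge> 0" using LOC1[OF fA that(1)] muA_pos[of a n ?H] that by (simp add: zero_le_mult_iff)
    moreover have "G!a \<le> 0" using LOC1[OF fB that(1)] muB_neg[of a n ?H] that by (simp add: zero_le_mult_iff)
    ultimately show ?thesis by simp
  qed
  show "\<bar>G!a\<bar> \<le> \<bar>G!b\<bar>" if "a < n" "b < n" "\<bar>?H!a\<bar> < \<bar>?H!b\<bar>" for a b
    using LOC2[OF fA that(1,2) D_lt[OF DA that]] .
  have opp: "\<bar>G!a\<bar> = \<bar>G!b\<bar>" if "a < n" "b < n" "?H!a > 0" "?H!b = - ?H!a" for a b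
  proof -
    have "\<bar>G!b\<bar> \<le> \<bar>G!a\<bar>" using LOC2[OF fA that(2,1) muA_opp[OF that]] .
    moreover have "\<bar>G!a\<bar> \<le> \<bar>G!b\<bar>" using LOC2[OF fB that(1,2) muB_opp[OF that]] .
    ultimately show ?thesis by simp
  qed
  have opp2: "\<bar>G!a\<bar> = \<bar>G!b\<bar>" if "a < n" "b < n" "?H!a \<noteq> 0" "?H!b = - ?H!a" for a b
  proof (cases "?H!a > 0")
    case True show ?thesis using opp[OF that(1,2) True that(4)] .
  next
    case False
    then have "?H!b > 0" "?H!a = - ?H!b" using that by auto
    then show ?thesis using opp[of b a] that(1,2) by simp
  qed
  show "\<bar>G!a\<bar> = \<bar>G!b\<bar>" if ab: "a < n" "b < n" "\<bar>?H!a\<bar> = \<bar>?H!b\<bar>" for a b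
  proof (cases "?H!a = 0")
    case True
    then have "?H!b = 0" using ab by simp
    then show ?thesis using t3[OF ab(1) True] t3[OF ab(2)] by simp
  next
    case nz: False
    show ?thesis
    proof (cases "?H!a = ?H!b")
      case True
      show ?thesis
      proof (cases "a = b")
        case False
        obtain k where k: "k < n" "?H!k = - ?H!a" using H5[OF ab(1,2) False True nz] by blast
        show ?thesis using opp2[OF ab(1) k(1) nz k(2)] opp2[of b k] ab(2) k nz True by simp
      qed simp
    next
      case False
      then have "?H!b = - ?H!a" using ab(3) abs_eq_iff[of "?H!a" "?H!b"] by auto
      then show ?thesis using opp2[OF ab(1,2) nz] by simp
    qed
  qed
qed

lemma rank:
  assumes a: "a < n"
  shows "\<bar>Hvec n ps ! a\<bar> = real (card ((\<lambda>b. \<bar>Hvec n ps ! b\<bar>) ` {b. b < n \<and> 0 < \<bar>Hvec n ps ! b\<bar> \<and> \<bar>Hvec n ps ! b\<bar> \<le> \<bar>Hvec n ps ! a\<bar>}))"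
proof -
  let ?H = "Hvec n ps"
  obtain m where m: "m \<le> length ps" "\<bar>?H!a\<bar> = real m" using H3[OF a] by auto
  have "(\<lambda>b. \<bar>?H!b\<bar>) ` {b. b < n \<and> 0 < \<bar>?H!b\<bar> \<and> \<bar>?H!b\<bar> \<le> \<bar>?H!a\<bar>} = real ` {1..m}"
  proof
    show "(\<lambda>b. \<bar>?H!b\<bar>) ` {b. b < n \<and> 0 < \<bar>?H!b\<bar> \<and> \<bar>?H!b\<bar> \<le> \<bar>?H!a\<bar>} \<subseteq> real ` {1..m}"
    proof
      fix x assume "x \<in> (\<lambda>b. \<bar>?H!b\<bar>) ` {b. b < n \<and> 0 < \<bar>?H!b\<bar> \<and> \<bar>?H!b\<bar> \<le> \<bar>?H!a\<bar>}"
      then obtain b where b: "b < n" "0 < \<bar>?H!b\<bar>" "\<bar>?H!b\<bar> \<le> \<bar>?H!a\<bar>" "x = \<bar>?H!b\<bar>" by auto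
      obtain m' where m': "\<bar>?H!b\<bar> = real m'" using H3[OF b(1)] by auto
      then show "x \<in> real ` {1..m}" using b m by auto
    qed
    show "real ` {1..m} \<subseteq> (\<lambda>b. \<bar>?H!b\<bar>) ` {b. b < n \<and> 0 < \<bar>?H!b\<bar> \<and> \<bar>?H!b\<bar> \<le> \<bar>?H!a\<bar>}"
    proof
      fix x assume "x \<in> real ` {1..m}"
      then obtain t where t: "1 \<le> t" "t \<le> m" "x = real t" by auto
      obtain b where "b < n" "\<bar>?H!b\<bar> = real t" using H4[of t] t m by auto
      then show "x \<in> (\<lambda>b. \<bar>?H!b\<bar>) ` {b. b < n \<and> 0 < \<bar>?H!b\<bar> \<and> \<bar>?H!b\<bar> \<le> \<bar>?H!a\<bar>}"
        using t m by (auto intro!: image_eqI[of _ _ b])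
    qed
  qed
  then show ?thesis using m by (simp add: card_image)
qed

end

lemma card_img_eq:
  assumes "finite A" "\<And>x y. x \<in> A \<Longrightarrow> y \<in> A \<Longrightarrow> f x = f y \<longleftrightarrow> g x = g y"
  shows "card (f ` A) = card (g ` A)"
proof -
  define \<phi> where "\<phi> v = g (inv_into A f v)" for v
  have \<phi>f: "\<phi> (f x) = g x" if "x \<in> A" for x
  proof -
    have "inv_into A f (f x) \<in> A" "f (inv_into A f (f x)) = f x"
      using that by (auto intro: inv_into_into f_inv_into_f)
    then show ?thesis using assms(2) that by (simp add: \<phi>_def)
  qed
  have img: "\<phi> ` (f ` A) = g ` A"
    using \<phi>f by (auto simp: image_image image_iff)
  have inj: "inj_on \<phi> (f ` A)"
  proof (rule inj_onI)
    fix u v assume "u \<in> f ` A" "v \<in> f ` A" "\<phi> u = \<phi> v"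
    then obtain x y where xy: "x \<in> A" "y \<in> A" "u = f x" "v = f y" by auto
    then have "g x = g y" using \<phi>f \<open>\<phi> u = \<phi> v\<close> by simp
    then show "u = v" using xy assms(2) by auto
  qed
  show ?thesis using card_image[OF inj] img by simp
qed

lemma part4:
  assumes a1: "admissible n ps" and a2: "admissible n ps'"
    and F: "face n (Hvec n ps') \<inter> Ck n = face n (Hvec n ps) \<inter> Ck n"
  shows "ps' = ps"
proof -
  interpret A: hv n ps by unfold_locales (rule a1)
  interpret B: hv n ps' by unfold_locales (rule a2)
  let ?H = "Hvec n ps" and ?G = "Hvec n ps'"
  have FA: "face n ?H \<inter> Ck n \<subseteq> face n ?G" using F by blast
  have FB: "face n ?G \<inter> Ck n \<subseteq> face n ?H" using F by blast
  note TA = A.T[OF FA] and TB = B.T[OF FB]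
  have sg: "sgn (?H!a) = sgn (?G!a)" if a: "a < n" for a
  proof -
    consider "?H!a > 0" | "?H!a < 0" | "?H!a = 0" by linarith
    then show ?thesis
    proof cases
      case 1
      have "?G!a \<ge> 0" using TA(1)[OF a 1] .
      moreover have "?G!a \<noteq> 0" using TB(3)[OF a] 1 by auto
      ultimately show ?thesis using 1 by simp
    next
      case 2
      have "?G!a \<le> 0" using TA(2)[OF a 2] .
      moreover have "?G!a \<noteq> 0" using TB(3)[OF a] 2 by auto
      ultimately show ?thesis using 2 by simp
    qed (use TA(3)[OF a] in simp)
  qed
  have eqv: "\<bar>?H!a\<bar> = \<bar>?H!b\<bar> \<longleftrightarrow> \<bar>?G!a\<bar> = \<bar>?G!b\<bar>" if "a < n" "b < n" for a b
    using TA(5)[OF that] TB(5)[OF that] by blast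
  have lt: "\<bar>?H!a\<bar> < \<bar>?H!b\<bar> \<Longrightarrow> \<bar>?G!a\<bar> < \<bar>?G!b\<bar>" if "a < n" "b < n" for a b
    using TA(4)[OF that] TB(5)[OF that] by fastforce
  have lt': "\<bar>?G!a\<bar> < \<bar>?G!b\<bar> \<Longrightarrow> \<bar>?H!a\<bar> < \<bar>?H!b\<bar>" if "a < n" "b < n" for a b
    using TB(4)[OF that] TA(5)[OF that] by fastforce
  have le: "\<bar>?H!b\<bar> \<le> \<bar>?H!a\<bar> \<longleftrightarrow> \<bar>?G!b\<bar> \<le> \<bar>?G!a\<bar>" if "a < n" "b < n" for a b
  proof
    assume h: "\<bar>?H!b\<bar> \<le> \<bar>?H!a\<bar>"
    show "\<bar>?G!b\<bar> \<le> \<bar>?G!a\<bar>"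
    proof (cases "\<bar>?H!b\<bar> = \<bar>?H!a\<bar>")
      case True then show ?thesis using eqv[OF that(2,1)] by simp
    next
      case False then show ?thesis using h lt[OF that(2,1)] by simp
    qed
  next
    assume h: "\<bar>?G!b\<bar> \<le> \<bar>?G!a\<bar>"
    show "\<bar>?H!b\<bar> \<le> \<bar>?H!a\<bar>"
    proof (cases "\<bar>?G!b\<bar> = \<bar>?G!a\<bar>")
      case True then show ?thesis using eqv[OF that(2,1)] by simp
    next
      case False then show ?thesis using h lt'[OF that(2,1)] by simp
    qed
  qed
  have pz: "0 < \<bar>?H!b\<bar> \<longleftrightarrow> 0 < \<bar>?G!b\<bar>" if "b < n" for b
    using sg[OF that] by (auto simp: sgn_if split: if_splits)
  have absq: "\<bar>?H!a\<bar> = \<bar>?G!a\<bar>" if a: "a < n" for a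
  proof -
    have S: "{b. b < n \<and> 0 < \<bar>?H!b\<bar> \<and> \<bar>?H!b\<bar> \<le> \<bar>?H!a\<bar>} = {b. b < n \<and> 0 < \<bar>?G!b\<bar> \<and> \<bar>?G!b\<bar> \<le> \<bar>?G!a\<bar>}"
    proof (rule Collect_cong)
      fix b show "(b < n \<and> 0 < \<bar>?H!b\<bar> \<and> \<bar>?H!b\<bar> \<le> \<bar>?H!a\<bar>) \<longleftrightarrow> (b < n \<and> 0 < \<bar>?G!b\<bar> \<and> \<bar>?G!b\<bar> \<le> \<bar>?G!a\<bar>)"
      proof (cases "b < n")
        case True then show ?thesis using pz[OF True] le[OF a True] by simp
      qed simp
    qed
    have "card ((\<lambda>b. \<bar>?H!b\<bar>) ` {b. b < n \<and> 0 < \<bar>?H!b\<bar> \<and> \<bar>?H!b\<bar> \<le> \<bar>?H!a\<bar>})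
        = card ((\<lambda>b. \<bar>?G!b\<bar>) ` {b. b < n \<and> 0 < \<bar>?H!b\<bar> \<and> \<bar>?H!b\<bar> \<le> \<bar>?H!a\<bar>})"
    proof (rule card_img_eq)
      fix x y assume "x \<in> {b. b < n \<and> 0 < \<bar>?H!b\<bar> \<and> \<bar>?H!b\<bar> \<le> \<bar>?H!a\<bar>}"
        "y \<in> {b. b < n \<and> 0 < \<bar>?H!b\<bar> \<and> \<bar>?H!b\<bar> \<le> \<bar>?H!a\<bar>}"
      then have "x < n" "y < n" by auto
      then show "(\<bar>?H!x\<bar> = \<bar>?H!y\<bar>) \<longleftrightarrow> (\<bar>?G!x\<bar> = \<bar>?G!y\<bar>)" by (rule eqv)
    qed simp
    then show ?thesis using A.rank[OF a] B.rank[OF a] S by simp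
  qed
  have "?H = ?G"
  proof (rule nth_equalityI)
    show "length ?H = length ?G" using A.len_H B.len_H by simp
    fix a assume "a < length ?H"
    then have a: "a < n" using A.len_H by simp
    have "?H!a = sgn (?H!a) * \<bar>?H!a\<bar>" by (simp add: sgn_mult_abs)
    also have "\<dots> = sgn (?G!a) * \<bar>?G!a\<bar>" using sg[OF a] absq[OF a] by simp
    also have "\<dots> = ?G!a" by (simp add: sgn_mult_abs)
    finally show "?H!a = ?G!a" .
  qed
  then show ?thesis using Hvec_inj[OF a2 a1] by simp
qed

theorem theorem3p3:
  fixes n :: nat and ps :: "(nat \<times> nat) list"
  assumes "n \<ge> 2" and "admissible n ps"
  shows "face n (Hvec n ps) = face_descr n ps
       \<and> (\<forall>\<rho>'' \<in> face n (Hvec n ps). face n (Hvec n ps) = (\<lambda>w. w \<rho>'') ` Wl n (Hvec n ps))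
       \<and> face n (Hvec n ps) \<inter> Ck n =
           {\<mu> \<in> face n (Hvec n ps). \<forall>i j. i < j \<and> j < n \<longrightarrow> \<mu> ! j < \<mu> ! i}
       \<and> (\<forall>ps'. admissible n ps' \<and> face n (Hvec n ps') \<inter> Ck n = face n (Hvec n ps) \<inter> Ck n
                \<longrightarrow> ps' = ps)"
proof -
  interpret A: hv n ps by unfold_locales (rule assms(2))
  have 1: "face n (Hvec n ps) = face_descr n ps" using A.descr_eq face_eq_D by simp
  have 2: "\<forall>\<rho>'' \<in> face n (Hvec n ps). face n (Hvec n ps) = (\<lambda>w. w \<rho>'') ` Wl n (Hvec n ps)"
    using part2 by blast
  have 4: "\<forall>ps'. admissible n ps' \<and> face n (Hvec n ps') \<inter> Ck n = face n (Hvec n ps) \<inter> Ck n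
                \<longrightarrow> ps' = ps" using part4[OF assms(2)] by blast
  show ?thesis using 1 2 part3 4 by blast
qed


end
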